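(* Suppose $\varphi(Y,Z)\in L^2(\mathbb P)$ and that the cdf $F_{X_0}$ of $X_0=\mathbb E[\varphi(Y,Z)\mid Y]$ is continuous. Then for every $\xi\in\mathbb R$, $$h_\ell^{-1/2}\big((X_{h_\ell}-\xi)^+-(X_{h_{\ell-1}}-\xi)^+\big)\xrightarrow{\ \mathcal L\ }\mathbf 1_{X_0>\xi}\,G\quad\text{as }\ell\uparrow\infty.$$
   Context: Let $Y$ ($\mathbb R^d$-valued) and $Z$ ($\mathbb R^q$-valued) be independent random variables and $\varphi:\mathbb R^d\times\mathbb R^q\to\mathbb R$ measurable. Fix integers $K\ge1$ and $M>1$, and set $h_\ell=\frac1{KM^\ell}$ for $\ell\ge0$. Let $(Z^{(k)})_{k\ge1}$ be i.i.d. copies of $Z$, independent of $Y$, and for $\ell\ge0$ let $X_{h_\ell}=\frac1{KM^\ell}\sum_{k=1}^{KM^\ell}\varphi(Y,Z^{(k)})$. Let $G=((M-1)\mathrm{Var}(\varphi(Y,Z)\mid Y))^{1/2}\mathfrak N$ with $\mathfrak N\sim\mathcal N(0,1)$ independent of $Y$ (so $X_0$, being $Y$-measurable, and $\mathfrak N$ are independent). *)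

theory Defs
  imports "HOL-Probability.Probability"
begin

definition real_cond_var :: "'a measure \<Rightarrow> 'a measure \<Rightarrow> ('a \<Rightarrow> real) \<Rightarrow> ('a \<Rightarrow> real)" where
  "real_cond_var M F f = real_cond_exp M F (\<lambda>x. (f x - real_cond_exp M F f x)^2)"

definition nested_X :: "nat \<Rightarrow> nat \<Rightarrow> ('y \<Rightarrow> 'z \<Rightarrow> real) \<Rightarrow> ('a \<Rightarrow> 'y) \<Rightarrow> (nat \<Rightarrow> 'a \<Rightarrow> 'z) \<Rightarrow> nat \<Rightarrow> 'a \<Rightarrow> real" where
  "nested_X K Mm \<phi> Y Zs l \<omega> =
     (1 / real (K * Mm ^ l)) * (\<Sum>k\<in>{1..K * Mm ^ l}. \<phi> (Y \<omega>) (Zs k \<omega>))"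

definition hstep :: "nat \<Rightarrow> nat \<Rightarrow> nat \<Rightarrow> real" where
  "hstep K Mm l = 1 / real (K * Mm ^ l)"

end

theory Submission
  imports Defs
begin

lemma one_plus_pow_lim:
  fixes x :: "nat \<Rightarrow> real" and a :: "nat \<Rightarrow> nat"
  assumes x0: "x \<longlonglongrightarrow> 0" and xnp: "\<And>n. x n \<le> 0" and ax: "(\<lambda>n. real (a n) * x n) \<longlonglongrightarrow> L"
  shows "(\<lambda>n. (1 + x n) ^ a n) \<longlonglongrightarrow> exp L"
proof -
  have ev: "\<forall>\<^sub>F n in sequentially. - (1/2) \<le> x n"
    using x0 by (auto simp: tendsto_iff dist_real_def dest!: spec[of _ "1/2"] elim!: eventually_mono)
  have "(\<lambda>n. real (a n) * x n * (2 * x n)) \<longlonglongrightarrow> L * (2 * 0)"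
    by (intro tendsto_intros ax x0)
  then have z: "(\<lambda>n. real (a n) * x n * (2 * x n)) \<longlonglongrightarrow> 0" by simp
  have bnd: "\<forall>\<^sub>F n in sequentially. norm (real (a n) * ln (1 + x n) - real (a n) * x n) \<le> real (a n) * x n * (2 * x n)"
    using ev
  proof (elim eventually_mono)
    fix n assume h: "- (1/2) \<le> x n"
    have "\<bar>ln (1 + x n) - x n\<bar> \<le> 2 * (x n)\<^sup>2"
      by (rule abs_ln_one_plus_x_minus_x_bound_nonpos[OF h xnp])
    then have "real (a n) * \<bar>ln (1 + x n) - x n\<bar> \<le> real (a n) * (2 * (x n)\<^sup>2)"
      by (intro mult_left_mono) auto
    moreover have "norm (real (a n) * ln (1 + x n) - real (a n) * x n) = real (a n) * \<bar>ln (1 + x n) - x n\<bar>"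
      by (simp add: right_diff_distrib[symmetric] abs_mult)
    ultimately show "norm (real (a n) * ln (1 + x n) - real (a n) * x n) \<le> real (a n) * x n * (2 * x n)"
      by (simp add: power2_eq_square algebra_simps)
  qed
  have "(\<lambda>n. real (a n) * ln (1 + x n) - real (a n) * x n) \<longlonglongrightarrow> 0"
    by (rule Lim_null_comparison[OF bnd z])
  then have "(\<lambda>n. (real (a n) * ln (1 + x n) - real (a n) * x n) + real (a n) * x n) \<longlonglongrightarrow> 0 + L"
    by (intro tendsto_add ax)
  then have lim: "(\<lambda>n. exp (real (a n) * ln (1 + x n))) \<longlonglongrightarrow> exp L"
    by (intro tendsto_exp) simp
  have eq: "\<forall>\<^sub>F n in sequentially. exp (real (a n) * ln (1 + x n)) = (1 + x n) ^ a n"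
    using ev
  proof (elim eventually_mono)
    fix n assume h: "- (1/2) \<le> x n"
    then have "0 < 1 + x n" by simp
    then show "exp (real (a n) * ln (1 + x n)) = (1 + x n) ^ a n"
      by (simp add: exp_of_nat_mult ln_ge_zero_imp_ge_one)
  qed
  show ?thesis by (rule iffD1[OF tendsto_cong[OF eq] lim])
qed

lemma char_pow_lim:
  fixes \<mu> :: "real measure" and s :: "nat \<Rightarrow> real" and a :: "nat \<Rightarrow> nat"
  assumes rd: "real_distribution \<mu>"
    and i1: "integrable \<mu> (\<lambda>x. x)" and m0: "integral\<^sup>L \<mu> (\<lambda>x. x) = 0"
    and i2: "integrable \<mu> (\<lambda>x. x^2)"
    and s0: "s \<longlonglongrightarrow> 0" and as: "(\<lambda>n. real (a n) * (s n)^2) \<longlonglongrightarrow> c"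
  shows "(\<lambda>n. char \<mu> (s n) ^ a n) \<longlonglongrightarrow> complex_of_real (exp (- (integral\<^sup>L \<mu> (\<lambda>x. x^2)) * c / 2))"
proof -
  interpret real_distribution \<mu> by fact
  define \<sigma>2 where "\<sigma>2 = integral\<^sup>L \<mu> (\<lambda>x. x^2)"
  have \<sigma>2nn: "\<sigma>2 \<ge> 0" unfolding \<sigma>2_def by (intro integral_nonneg_AE) auto
  have var: "variance (\<lambda>x. x) = \<sigma>2" using m0 by (simp add: \<sigma>2_def)
  define e where "e n = expectation (\<lambda>x. min (6 * x^2) (\<bar>s n\<bar> * \<bar>x\<bar>^3))" for n
  have appr: "cmod (char \<mu> (s n) - (1 - (s n)^2 * \<sigma>2 / 2)) \<le> ((s n)^2 / 6) * e n" for n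
    unfolding e_def by (rule char_approx3[OF i1 m0 i2 var])
  have "(\<lambda>n. e n) \<longlonglongrightarrow> (LINT x|\<mu>. 0)"
    unfolding e_def
  proof (rule integral_dominated_convergence[where w = "\<lambda>x. 6 * x^2"])
    show "(\<lambda>x. 0) \<in> borel_measurable \<mu>" by simp
    show "\<And>i. (\<lambda>x. min (6 * x\<^sup>2) (\<bar>s i\<bar> * \<bar>x\<bar> ^ 3)) \<in> borel_measurable \<mu>" by simp
    show "integrable \<mu> (\<lambda>x. 6 * x\<^sup>2)" using i2 by simp
    show "AE x in \<mu>. (\<lambda>i. min (6 * x\<^sup>2) (\<bar>s i\<bar> * \<bar>x\<bar> ^ 3)) \<longlonglongrightarrow> 0"
    proof (rule AE_I2)
      fix x
      have "(\<lambda>i. min (6 * x\<^sup>2) (\<bar>s i\<bar> * \<bar>x\<bar> ^ 3)) \<longlonglongrightarrow> min (6 * x\<^sup>2) (\<bar>0\<bar> * \<bar>x\<bar> ^ 3)"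
        by (intro tendsto_intros s0; simp)
      then show "(\<lambda>i. min (6 * x\<^sup>2) (\<bar>s i\<bar> * \<bar>x\<bar> ^ 3)) \<longlonglongrightarrow> 0" by simp
    qed
    show "\<And>i. AE x in \<mu>. norm (min (6 * x\<^sup>2) (\<bar>s i\<bar> * \<bar>x\<bar> ^ 3)) \<le> 6 * x\<^sup>2"
    proof (intro AE_I2)
      fix i x
      have "0 \<le> \<bar>s i\<bar> * \<bar>x\<bar> ^ 3" "0 \<le> 6 * x\<^sup>2" by simp_all
      then show "norm (min (6 * x\<^sup>2) (\<bar>s i\<bar> * \<bar>x\<bar> ^ 3)) \<le> 6 * x\<^sup>2"
        by (smt (verit) real_norm_def)
    qed
  qed
  then have e0: "e \<longlonglongrightarrow> 0" by simp
  have "(\<lambda>n. (real (a n) * (s n)^2) / 6 * e n) \<longlonglongrightarrow> c / 6 * 0"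
    by (intro tendsto_intros as e0; simp)
  then have r0: "(\<lambda>n. (real (a n) * (s n)^2) / 6 * e n) \<longlonglongrightarrow> 0" by simp
  define x where "x n = - ((s n)^2 * \<sigma>2 / 2)" for n
  have x0: "x \<longlonglongrightarrow> 0"
  proof -
    have "(\<lambda>n. - ((s n)^2 * \<sigma>2 / 2)) \<longlonglongrightarrow> - (0^2 * \<sigma>2 / 2)" by (intro tendsto_intros s0; simp)
    then show ?thesis by (simp add: x_def[abs_def])
  qed
  have xnp: "x n \<le> 0" for n using \<sigma>2nn by (simp add: x_def)
  have "(\<lambda>n. - (real (a n) * (s n)^2) * \<sigma>2 / 2) \<longlonglongrightarrow> - c * \<sigma>2 / 2"
    by (intro tendsto_intros as; simp)
  then have ax: "(\<lambda>n. real (a n) * x n) \<longlonglongrightarrow> - \<sigma>2 * c / 2"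
    by (simp add: x_def algebra_simps)
  have lim1: "(\<lambda>n. (1 + x n) ^ a n) \<longlonglongrightarrow> exp (- \<sigma>2 * c / 2)"
    by (rule one_plus_pow_lim[OF x0 xnp ax])
  then have lim1c: "(\<lambda>n. complex_of_real ((1 + x n) ^ a n)) \<longlonglongrightarrow> complex_of_real (exp (- \<sigma>2 * c / 2))"
    by (intro tendsto_intros)
  have evx: "\<forall>\<^sub>F n in sequentially. - 1 \<le> x n"
    using x0 by (auto simp: tendsto_iff dist_real_def dest!: spec[of _ "1"] elim!: eventually_mono)
  have bnd: "\<forall>\<^sub>F n in sequentially. norm (char \<mu> (s n) ^ a n - complex_of_real ((1 + x n) ^ a n))
      \<le> (real (a n) * (s n)^2) / 6 * e n"
    using evx
  proof (elim eventually_mono)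
    fix n assume h: "- 1 \<le> x n"
    have n1: "norm (complex_of_real (1 + x n)) \<le> 1" unfolding norm_of_real using h xnp[of n] by simp
    have "norm (char \<mu> (s n) ^ a n - complex_of_real (1 + x n) ^ a n)
        \<le> real (a n) * norm (char \<mu> (s n) - complex_of_real (1 + x n))"
      by (rule norm_power_diff[OF cmod_char_le_1 n1])
    also have "char \<mu> (s n) - complex_of_real (1 + x n) = char \<mu> (s n) - (1 - (s n)^2 * \<sigma>2 / 2)"
      by (simp add: x_def)
    also have "real (a n) * cmod \<dots> \<le> real (a n) * (((s n)^2 / 6) * e n)"
      by (intro mult_left_mono appr) auto
    finally show "norm (char \<mu> (s n) ^ a n - complex_of_real ((1 + x n) ^ a n))
      \<le> (real (a n) * (s n)^2) / 6 * e n" by simp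
  qed
  have "(\<lambda>n. char \<mu> (s n) ^ a n - complex_of_real ((1 + x n) ^ a n)) \<longlonglongrightarrow> 0"
    by (rule Lim_null_comparison[OF bnd r0])
  then have "(\<lambda>n. (char \<mu> (s n) ^ a n - complex_of_real ((1 + x n) ^ a n)) + complex_of_real ((1 + x n) ^ a n))
       \<longlonglongrightarrow> 0 + complex_of_real (exp (- \<sigma>2 * c / 2))"
    by (intro tendsto_add lim1c)
  then show ?thesis by (simp add: \<sigma>2_def)
qed

lemma (in prob_space) indep_set_distr_pair:
  assumes X[measurable]: "X \<in> measurable M S" and W[measurable]: "W \<in> measurable M T"
    and ind: "indep_set (sets (vimage_algebra (space M) X S)) (sets (vimage_algebra (space M) W T))"
  shows "distr M (S \<Otimes>\<^sub>M T) (\<lambda>\<omega>. (X \<omega>, W \<omega>)) = distr M S X \<Otimes>\<^sub>M distr M T W"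
proof (rule pair_measure_eqI[symmetric])
  show "sigma_finite_measure (distr M S X)"
    by (rule prob_space_imp_sigma_finite[OF prob_space_distr[OF X]])
  show "sigma_finite_measure (distr M T W)"
    by (rule prob_space_imp_sigma_finite[OF prob_space_distr[OF W]])
  show "sets (distr M S X \<Otimes>\<^sub>M distr M T W) = sets (distr M (S \<Otimes>\<^sub>M T) (\<lambda>\<omega>. (X \<omega>, W \<omega>)))"
    by (simp only: sets_distr sets_pair_measure_cong[OF sets_distr sets_distr])
  fix A B assume A: "A \<in> sets (distr M S X)" and B: "B \<in> sets (distr M T W)"
  then have A': "A \<in> sets S" and B': "B \<in> sets T" by auto
  have "emeasure (distr M (S \<Otimes>\<^sub>M T) (\<lambda>\<omega>. (X \<omega>, W \<omega>))) (A \<times> B)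
      = emeasure M ((X -` A \<inter> space M) \<inter> (W -` B \<inter> space M))"
  proof -
    have "(\<lambda>\<omega>. (X \<omega>, W \<omega>)) -` (A \<times> B) \<inter> space M = (X -` A \<inter> space M) \<inter> (W -` B \<inter> space M)"
      by auto
    moreover have "A \<times> B \<in> sets (S \<Otimes>\<^sub>M T)" using A' B' by simp
    ultimately show ?thesis by (simp add: emeasure_distr)
  qed
  also have "\<dots> = ennreal (prob ((X -` A \<inter> space M) \<inter> (W -` B \<inter> space M)))"
    by (simp add: emeasure_eq_measure)
  also have "prob ((X -` A \<inter> space M) \<inter> (W -` B \<inter> space M)) = prob (X -` A \<inter> space M) * prob (W -` B \<inter> space M)"
    by (rule indep_setD[OF ind in_vimage_algebra[OF A'] in_vimage_algebra[OF B']])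
  also have "ennreal (prob (X -` A \<inter> space M) * prob (W -` B \<inter> space M))
      = emeasure (distr M S X) A * emeasure (distr M T W) B"
    using A' B' by (simp add: emeasure_distr emeasure_eq_measure ennreal_mult)
  finally show "emeasure (distr M S X) A * emeasure (distr M T W) B =
      emeasure (distr M (S \<Otimes>\<^sub>M T) (\<lambda>\<omega>. (X \<omega>, W \<omega>))) (A \<times> B)" by simp
qed


locale nested = prob_space M for M :: "'a measure" +
  fixes Y :: "'a \<Rightarrow> real ^ 'd"
    and Z :: "'a \<Rightarrow> real ^ 'q"
    and Zs :: "nat \<Rightarrow> 'a \<Rightarrow> real ^ 'q"
    and \<phi> :: "real ^ 'd \<Rightarrow> real ^ 'q \<Rightarrow> real"
    and N :: "'a \<Rightarrow> real"
  assumes Y_meas[measurable]: "Y \<in> borel_measurable M"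
    and Z_meas[measurable]: "Z \<in> borel_measurable M"
    and Zs_meas[measurable]: "\<And>k. Zs k \<in> borel_measurable M"
    and phi_meas: "(\<lambda>(y, z). \<phi> y z) \<in> borel_measurable borel"
    and indep_YZ: "indep_set (sets (vimage_algebra (space M) Y borel))
                                          (sets (vimage_algebra (space M) Z borel))"
    and Zs_copies: "\<And>k. k \<ge> 1 \<Longrightarrow> distr M borel (Zs k) = distr M borel Z"
    and indep_Y_Zs: "indep_sets
          (\<lambda>i. case i of None \<Rightarrow> sets (vimage_algebra (space M) Y borel)
                       | Some k \<Rightarrow> sets (vimage_algebra (space M) (Zs k) borel))
          (insert None (Some ` {1..}))"
    and N_meas[measurable]: "N \<in> borel_measurable M"
    and N_normal: "distr M borel N = density lborel std_normal_density"
    and indep_NY: "indep_set (sets (vimage_algebra (space M) Y borel))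
                                          (sets (vimage_algebra (space M) N borel))"
    and L2: "integrable M (\<lambda>\<omega>. (\<phi> (Y \<omega>) (Z \<omega>))^2)"
begin

abbreviation "PY \<equiv> distr M borel Y"
abbreviation "PZ \<equiv> distr M borel Z"

lemma phi_measurable[measurable (raw)]:
  assumes [measurable]: "f \<in> borel_measurable Q" "g \<in> borel_measurable Q"
  shows "(\<lambda>x. \<phi> (f x) (g x)) \<in> borel_measurable Q"
proof -
  have "(\<lambda>x. (f x, g x)) \<in> measurable Q (borel \<Otimes>\<^sub>M borel)" by measurable
  then have "(\<lambda>x. (f x, g x)) \<in> measurable Q borel" by (simp add: borel_prod)
  from measurable_compose[OF this phi_meas] show ?thesis by simp
qed

lemma PZ_prob: "prob_space PZ" by (rule prob_space_distr) simp
lemma PY_prob: "prob_space PY" by (rule prob_space_distr) simp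
lemma sets_PZ[simp]: "sets PZ = sets borel" by simp
lemma space_PZ[simp]: "space PZ = UNIV" by simp

lemma YZ_distr: "distr M (borel \<Otimes>\<^sub>M borel) (\<lambda>\<omega>. (Y \<omega>, Z \<omega>)) = PY \<Otimes>\<^sub>M PZ"
  by (rule indep_set_distr_pair[OF Y_meas Z_meas indep_YZ])

lemma YN_distr: "distr M (borel \<Otimes>\<^sub>M borel) (\<lambda>\<omega>. (Y \<omega>, N \<omega>)) = PY \<Otimes>\<^sub>M distr M borel N"
  by (rule indep_set_distr_pair[OF Y_meas N_meas indep_NY])

end

context nested begin

definition V :: "nat option \<Rightarrow> 'a \<Rightarrow> (real ^ 'd) \<times> (real ^ 'q)" where
  "V i \<omega> = (case i of None \<Rightarrow> (Y \<omega>, 0) | Some k \<Rightarrow> (0, Zs k \<omega>))"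

lemma pair_meas_borel:
  assumes "f \<in> borel_measurable Q" "g \<in> borel_measurable Q"
  shows "(\<lambda>x. (f x, g x)) \<in> measurable Q (borel :: ('x::second_countable_topology \<times> 'y::second_countable_topology) measure)"
  unfolding borel_prod[symmetric] using assms by (rule measurable_Pair)

lemma V_meas[measurable]: "V i \<in> borel_measurable M"
  by (cases i) (auto simp: V_def[abs_def] intro!: pair_meas_borel)

lemma V_indep: "indep_vars (\<lambda>_. borel) V (insert None (Some ` {1..n}))"
  unfolding indep_vars_def2
proof (intro conjI ballI)
  show "\<And>i. i \<in> insert None (Some ` {1..n}) \<Longrightarrow> V i \<in> borel_measurable M" by simp
  show "indep_sets (\<lambda>i. {V i -` A \<inter> space M |A. A \<in> sets borel}) (insert None (Some ` {1..n}))"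
  proof (rule indep_sets_mono[OF indep_Y_Zs])
    show "insert None (Some ` {1..n}) \<subseteq> insert None (Some ` {1..})" by auto
    fix i assume "i \<in> insert None (Some ` {1..n})"
    show "{V i -` A \<inter> space M |A. A \<in> sets borel} \<subseteq>
        (case i of None \<Rightarrow> sets (vimage_algebra (space M) Y borel)
         | Some k \<Rightarrow> sets (vimage_algebra (space M) (Zs k) borel))"
    proof (cases i)
      case None
      show ?thesis
      proof
        fix S assume "S \<in> {V i -` A \<inter> space M |A. A \<in> sets borel}"
        then obtain A where A: "A \<in> sets borel" and S: "S = V i -` A \<inter> space M" by auto
        have m: "(\<lambda>y::real^'d. (y, 0::real^'q)) \<in> measurable borel borel"
          unfolding borel_prod[symmetric] by measurable
        have "(\<lambda>y::real^'d. (y, 0::real^'q)) -` A \<inter> space borel \<in> sets borel"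
          by (rule measurable_sets[OF m A])
        then have B: "(\<lambda>y::real^'d. (y, 0::real^'q)) -` A \<in> sets borel" by simp
        have "S = Y -` ((\<lambda>y::real^'d. (y, 0::real^'q)) -` A) \<inter> space M"
          using S None by (auto simp: V_def)
        then show "S \<in> (case i of None \<Rightarrow> sets (vimage_algebra (space M) Y borel)
         | Some k \<Rightarrow> sets (vimage_algebra (space M) (Zs k) borel))"
          using None in_vimage_algebra[OF B] by simp
      qed
    next
      case (Some k)
      show ?thesis
      proof
        fix S assume "S \<in> {V i -` A \<inter> space M |A. A \<in> sets borel}"
        then obtain A where A: "A \<in> sets borel" and S: "S = V i -` A \<inter> space M" by auto
        have m: "(\<lambda>z::real^'q. (0::real^'d, z)) \<in> measurable borel borel"
          unfolding borel_prod[symmetric] by measurable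
        have "(\<lambda>z::real^'q. (0::real^'d, z)) -` A \<inter> space borel \<in> sets borel"
          by (rule measurable_sets[OF m A])
        then have B: "(\<lambda>z::real^'q. (0::real^'d, z)) -` A \<in> sets borel" by simp
        have "S = Zs k -` ((\<lambda>z::real^'q. (0::real^'d, z)) -` A) \<inter> space M"
          using S Some by (auto simp: V_def)
        then show "S \<in> (case i of None \<Rightarrow> sets (vimage_algebra (space M) Y borel)
         | Some k \<Rightarrow> sets (vimage_algebra (space M) (Zs k) borel))"
          using Some in_vimage_algebra[OF B] by simp
      qed
    qed
  qed
qed

lemma V_distr: "distr M (\<Pi>\<^sub>M i\<in>insert None (Some ` {1..n}). borel) (\<lambda>\<omega>. \<lambda>i\<in>insert None (Some ` {1..n}). V i \<omega>)
   = (\<Pi>\<^sub>M i\<in>insert None (Some ` {1..n}). distr M borel (V i))"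
  using V_indep[of n] indep_vars_iff_distr_eq_PiM'[of "insert None (Some ` {1..n})" V "\<lambda>_. borel"] by simp


lemma PV_prob: "prob_space (distr M borel (V i))"
  by (rule prob_space_distr) simp

lemma bounded_integrable:
  fixes h :: "'x \<Rightarrow> complex"
  assumes "prob_space Q" "h \<in> borel_measurable Q" "\<And>x. norm (h x) \<le> 1"
  shows "integrable Q h"
proof -
  interpret Q: prob_space Q by fact
  show ?thesis by (rule Q.integrable_const_bound[where B=1]) (use assms in auto)
qed

lemma prodform:
  fixes g :: "real^'d \<Rightarrow> complex" and f :: "nat \<Rightarrow> real^'d \<Rightarrow> real^'q \<Rightarrow> complex"
  assumes gm[measurable]: "g \<in> borel_measurable borel" and gb: "\<And>y. norm (g y) \<le> 1"
    and fm: "\<And>k. (\<lambda>p. f k (fst p) (snd p)) \<in> borel_measurable (borel \<Otimes>\<^sub>M borel)"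
    and fb: "\<And>k y z. norm (f k y z) \<le> 1"
  shows "(\<integral>\<omega>. g (Y \<omega>) * (\<Prod>k\<in>{1..n}. f k (Y \<omega>) (Zs k \<omega>)) \<partial>M)
       = (\<integral>\<omega>. g (Y \<omega>) * (\<Prod>k\<in>{1..n}. \<integral>z. f k (Y \<omega>) z \<partial>PZ) \<partial>M)"
proof -
  have fm'[measurable (raw)]: "(\<lambda>x. f k (a x) (b x)) \<in> borel_measurable Q"
    if [measurable]: "a \<in> borel_measurable Q" "b \<in> borel_measurable Q" for k a b and Q :: "'x measure"
  proof -
    have "(\<lambda>x. (a x, b x)) \<in> measurable Q (borel \<Otimes>\<^sub>M borel)" by measurable
    from measurable_compose[OF this fm[of k]] show ?thesis by simp
  qed
  define J where "J = Some ` {1..n}"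
  define I where "I = insert None J"
  define PV where "PV i = distr M borel (V i)" for i
  have PVp: "prob_space (PV i)" for i unfolding PV_def by (rule PV_prob)
  have sPV[simp]: "sets (PV i) = sets borel" "space (PV i) = UNIV" for i by (simp_all add: PV_def)
  interpret PS: product_sigma_finite PV
    unfolding product_sigma_finite_def using PVp prob_space_imp_sigma_finite by blast
  have NJ: "None \<notin> J" by (simp add: J_def)
  have fJ: "finite J" by (simp add: J_def)
  define G where "G X = g (fst (X None)) * (\<Prod>k\<in>{1..n}. f k (fst (X None)) (snd (X (Some k))))"
    for X :: "nat option \<Rightarrow> (real^'d) \<times> (real^'q)"
  have sPi: "sets (\<Pi>\<^sub>M i\<in>I. PV i) = sets (\<Pi>\<^sub>M i\<in>I. (borel :: ((real^'d) \<times> (real^'q)) measure))"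
    by (rule sets_PiM_cong) auto
  have fstm: "fst \<in> measurable (borel :: ((real^'d) \<times> (real^'q)) measure) borel"
    using measurable_fst[of "borel :: (real^'d) measure" "borel :: (real^'q) measure"] by (simp add: borel_prod)
  have sndm: "snd \<in> measurable (borel :: ((real^'d) \<times> (real^'q)) measure) borel"
    using measurable_snd[of "borel :: (real^'d) measure" "borel :: (real^'q) measure"] by (simp add: borel_prod)
  have cN[measurable]: "(\<lambda>X. fst (X None)) \<in> borel_measurable (\<Pi>\<^sub>M i\<in>I. (borel :: ((real^'d) \<times> (real^'q)) measure))"
    using measurable_compose[OF measurable_component_singleton[of None I] fstm] by (simp add: I_def)
  have cS[measurable]: "(\<lambda>X. snd (X (Some k))) \<in> borel_measurable (\<Pi>\<^sub>M i\<in>I. (borel :: ((real^'d) \<times> (real^'q)) measure))"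
    if "k \<in> {1..n}" for k
    using measurable_compose[OF measurable_component_singleton[of "Some k" I] sndm] that by (simp add: I_def J_def)
  have Gm: "G \<in> borel_measurable (\<Pi>\<^sub>M i\<in>I. (borel :: ((real^'d) \<times> (real^'q)) measure))"
    unfolding G_def by (intro borel_measurable_times borel_measurable_prod measurable_compose[OF cN gm] fm' cN cS) auto
  have Gm': "G \<in> borel_measurable (\<Pi>\<^sub>M i\<in>I. PV i)"
    using Gm by (simp add: measurable_cong_sets[OF sPi refl])
  have Gb: "norm (G X) \<le> 1" for X
    unfolding G_def norm_mult prod_norm[symmetric]
    by (intro mult_le_one prod_le_1 norm_ge_zero gb fb prod_nonneg conjI)
  have "(\<integral>\<omega>. g (Y \<omega>) * (\<Prod>k\<in>{1..n}. f k (Y \<omega>) (Zs k \<omega>)) \<partial>M) = (\<integral>\<omega>. G (\<lambda>i\<in>I. V i \<omega>) \<partial>M)"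
    by (rule Bochner_Integration.integral_cong[OF refl]) (simp add: G_def I_def J_def V_def)
  also have "\<dots> = (\<integral>X. G X \<partial>distr M (\<Pi>\<^sub>M i\<in>I. borel) (\<lambda>\<omega>. \<lambda>i\<in>I. V i \<omega>))"
    by (rule integral_distr[symmetric, OF measurable_restrict Gm]) simp
  also have "distr M (\<Pi>\<^sub>M i\<in>I. borel) (\<lambda>\<omega>. \<lambda>i\<in>I. V i \<omega>) = (\<Pi>\<^sub>M i\<in>I. PV i)"
    unfolding I_def J_def PV_def by (rule V_distr)
  also have "(\<Pi>\<^sub>M i\<in>I. PV i) = distr (PV None \<Otimes>\<^sub>M (\<Pi>\<^sub>M i\<in>J. PV i)) (\<Pi>\<^sub>M i\<in>I. PV i) (\<lambda>(x, X). X(None := x))"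
    unfolding I_def by (rule distr_pair_PiM_eq_PiM[symmetric]) (auto intro: PVp)
  also have "(\<integral>X. G X \<partial>\<dots>) = (\<integral>p. G ((\<lambda>(x, X). X(None := x)) p) \<partial>(PV None \<Otimes>\<^sub>M (\<Pi>\<^sub>M i\<in>J. PV i)))"
  proof (rule integral_distr)
    have "(\<lambda>p. (snd p)(None := fst p)) \<in> measurable (PV None \<Otimes>\<^sub>M (\<Pi>\<^sub>M i\<in>J. PV i)) (\<Pi>\<^sub>M i\<in>I. PV i)"
      by (rule measurable_fun_upd[where J=J]) (auto simp: I_def)
    then show "(\<lambda>(x, X). X(None := x)) \<in> measurable (PV None \<Otimes>\<^sub>M (\<Pi>\<^sub>M i\<in>J. PV i)) (\<Pi>\<^sub>M i\<in>I. PV i)"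
      by (simp add: case_prod_beta')
  qed (rule Gm')
  also have "\<dots> = (\<integral>x. (\<integral>X. G (X(None := x)) \<partial>(\<Pi>\<^sub>M i\<in>J. PV i)) \<partial>PV None)"
  proof -
    interpret PP: pair_sigma_finite "PV None" "\<Pi>\<^sub>M i\<in>J. PV i"
      by (intro pair_sigma_finite.intro prob_space_imp_sigma_finite PVp prob_space_PiM)
    interpret PQ: prob_space "PV None \<Otimes>\<^sub>M (\<Pi>\<^sub>M i\<in>J. PV i)"
      by (intro prob_space_pair PVp prob_space_PiM)
    have "integrable (PV None \<Otimes>\<^sub>M (\<Pi>\<^sub>M i\<in>J. PV i)) (\<lambda>p. G ((\<lambda>(x, X). X(None := x)) p))"
    proof (rule bounded_integrable)
      show "prob_space (PV None \<Otimes>\<^sub>M (\<Pi>\<^sub>M i\<in>J. PV i))" by unfold_locales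
      have "(\<lambda>p. (snd p)(None := fst p)) \<in> measurable (PV None \<Otimes>\<^sub>M (\<Pi>\<^sub>M i\<in>J. PV i)) (\<Pi>\<^sub>M i\<in>I. PV i)"
        by (rule measurable_fun_upd[where J=J]) (auto simp: I_def)
      from measurable_compose[OF this Gm']
      show "(\<lambda>p. G ((\<lambda>(x, X). X(None := x)) p)) \<in> borel_measurable (PV None \<Otimes>\<^sub>M (\<Pi>\<^sub>M i\<in>J. PV i))"
        by (simp add: case_prod_beta')
    qed (auto simp: Gb)
    from PP.integral_fst'[OF this] show ?thesis by simp
  qed
  also have "\<dots> = (\<integral>x. g (fst x) * (\<Prod>k\<in>{1..n}. \<integral>z. f k (fst x) z \<partial>PZ) \<partial>PV None)"
  proof (rule Bochner_Integration.integral_cong[OF refl])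
    fix x assume "x \<in> space (PV None)"
    define F where "F j w = f (the j) (fst x) (snd w)" for j :: "nat option" and w :: "(real^'d) \<times> (real^'q)"
    have Fm: "F j \<in> borel_measurable (PV j)" for j
      unfolding F_def measurable_cong_sets[OF sPV(1) refl] by (rule fm'[OF measurable_const sndm]) simp
    have eq1: "G (X(None := x)) = g (fst x) * (\<Prod>j\<in>J. F j (X j))" for X
      unfolding G_def F_def J_def by (simp add: prod.reindex)
    have "(\<integral>X. G (X(None := x)) \<partial>(\<Pi>\<^sub>M i\<in>J. PV i)) = (\<integral>X. g (fst x) * (\<Prod>j\<in>J. F j (X j)) \<partial>(\<Pi>\<^sub>M i\<in>J. PV i))"
      by (simp add: eq1)
    also have "\<dots> = g (fst x) * (\<integral>X. (\<Prod>j\<in>J. F j (X j)) \<partial>(\<Pi>\<^sub>M i\<in>J. PV i))"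
      by (rule integral_mult_right_zero)
    also have "(\<integral>X. (\<Prod>j\<in>J. F j (X j)) \<partial>(\<Pi>\<^sub>M i\<in>J. PV i)) = (\<Prod>j\<in>J. integral\<^sup>L (PV j) (F j))"
      by (rule PS.product_integral_prod[OF fJ]) (intro bounded_integrable PVp Fm; simp add: F_def fb)
    also have "\<dots> = (\<Prod>k\<in>{1..n}. \<integral>z. f k (fst x) z \<partial>PZ)"
    proof -
      have "integral\<^sup>L (PV (Some k)) (F (Some k)) = (\<integral>z. f k (fst x) z \<partial>PZ)" if k: "k \<in> {1..n}" for k
      proof -
        have "integral\<^sup>L (PV (Some k)) (F (Some k)) = (\<integral>\<omega>. F (Some k) (V (Some k) \<omega>) \<partial>M)"
          unfolding PV_def by (rule integral_distr) (simp, use Fm[of "Some k"] in \<open>simp add: measurable_cong_sets[OF sPV(1) refl]\<close>)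
        also have "\<dots> = (\<integral>\<omega>. f k (fst x) (Zs k \<omega>) \<partial>M)" by (simp add: F_def V_def)
        also have "\<dots> = (\<integral>z. f k (fst x) z \<partial>distr M borel (Zs k))"
          by (rule integral_distr[symmetric]) simp_all
        also have "\<dots> = (\<integral>z. f k (fst x) z \<partial>PZ)" using k Zs_copies[of k] by simp
        finally show ?thesis .
      qed
      then show ?thesis unfolding J_def by (simp add: prod.reindex)
    qed
    finally show "(\<integral>X. G (X(None := x)) \<partial>(\<Pi>\<^sub>M i\<in>J. PV i)) = g (fst x) * (\<Prod>k\<in>{1..n}. \<integral>z. f k (fst x) z \<partial>PZ)" .
  qed
  also have "\<dots> = (\<integral>\<omega>. g (fst (V None \<omega>)) * (\<Prod>k\<in>{1..n}. \<integral>z. f k (fst (V None \<omega>)) z \<partial>PZ) \<partial>M)"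
  proof -
    interpret PZs: prob_space PZ by (rule PZ_prob)
    have intm: "(\<lambda>y. \<integral>z. f k y z \<partial>PZ) \<in> borel_measurable borel" for k
    proof (rule PZs.borel_measurable_lebesgue_integral)
      have "(\<lambda>p. f k (fst p) (snd p)) \<in> borel_measurable (borel \<Otimes>\<^sub>M PZ)"
        using fm[of k] by (simp add: measurable_cong_sets[OF sets_pair_measure_cong[OF refl sets_PZ] refl])
      then show "(\<lambda>(y, z). f k y z) \<in> borel_measurable (borel \<Otimes>\<^sub>M PZ)" by (simp add: case_prod_beta')
    qed
    show ?thesis unfolding PV_def
      by (rule integral_distr) (simp, intro borel_measurable_times borel_measurable_prod measurable_compose[OF fstm gm] measurable_compose[OF fstm intm])
  qed
  also have "\<dots> = (\<integral>\<omega>. g (Y \<omega>) * (\<Prod>k\<in>{1..n}. \<integral>z. f k (Y \<omega>) z \<partial>PZ) \<partial>M)"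
    by (simp add: V_def)
  finally show ?thesis .
qed

end

context nested begin

definition "Fv = vimage_algebra (space M) Y borel"

lemma Fv_subalg: "subalgebra M Fv"
  unfolding subalgebra_def Fv_def using sets_image_in_sets[OF refl Y_meas] by simp

lemma Y_Fv_meas: "Y \<in> measurable Fv borel"
  unfolding Fv_def by (rule measurable_vimage_algebra1) simp

lemma phi2_meas: "(\<lambda>p. \<phi> (fst p) (snd p)) \<in> borel_measurable (borel \<Otimes>\<^sub>M borel)"
  by (rule phi_measurable) simp_all

lemma PYZ_sigma: "pair_sigma_finite PY PZ"
  by (intro pair_sigma_finite.intro prob_space_imp_sigma_finite PY_prob PZ_prob)

lemma PZ_sf: "sigma_finite_measure PZ"
  by (rule prob_space_imp_sigma_finite[OF PZ_prob])

lemma integral_YZ: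
  fixes h :: "real^'d \<Rightarrow> real^'q \<Rightarrow> real"
  assumes hm: "(\<lambda>p. h (fst p) (snd p)) \<in> borel_measurable (borel \<Otimes>\<^sub>M borel)"
    and hi: "integrable M (\<lambda>\<omega>. h (Y \<omega>) (Z \<omega>))"
  shows "integrable M (\<lambda>\<omega>. \<integral>z. h (Y \<omega>) z \<partial>PZ)"
    and "(\<integral>\<omega>. h (Y \<omega>) (Z \<omega>) \<partial>M) = (\<integral>\<omega>. (\<integral>z. h (Y \<omega>) z \<partial>PZ) \<partial>M)"
proof -
  interpret PP: pair_sigma_finite PY PZ by (rule PYZ_sigma)
  interpret PZs: prob_space PZ by (rule PZ_prob)
  have YZm: "(\<lambda>\<omega>. (Y \<omega>, Z \<omega>)) \<in> measurable M (borel \<Otimes>\<^sub>M borel)" by measurable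
  have hm': "(\<lambda>p. h (fst p) (snd p)) \<in> borel_measurable (PY \<Otimes>\<^sub>M PZ)"
    using hm by (simp add: measurable_cong_sets[OF sets_pair_measure_cong[OF sets_distr sets_PZ] refl])
  have "integrable (distr M (borel \<Otimes>\<^sub>M borel) (\<lambda>\<omega>. (Y \<omega>, Z \<omega>))) (\<lambda>p. h (fst p) (snd p))"
    using hi by (subst integrable_distr_eq[OF YZm hm]) simp
  then have ip: "integrable (PY \<Otimes>\<^sub>M PZ) (\<lambda>(y, z). h y z)"
    by (simp add: YZ_distr case_prod_beta')
  have Hm: "(\<lambda>y. \<integral>z. h y z \<partial>PZ) \<in> borel_measurable borel"
    by (rule sigma_finite_measure.borel_measurable_lebesgue_integral[OF PZ_sf])
       (use hm in \<open>simp add: case_prod_beta' measurable_cong_sets[OF sets_pair_measure_cong[OF refl sets_PZ] refl]\<close>)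
  have iH: "integrable PY (\<lambda>y. \<integral>z. h y z \<partial>PZ)"
    by (rule PP.integrable_fst[OF ip])
  then show "integrable M (\<lambda>\<omega>. \<integral>z. h (Y \<omega>) z \<partial>PZ)"
    by (subst (asm) integrable_distr_eq[OF Y_meas Hm])
  have "(\<integral>\<omega>. h (Y \<omega>) (Z \<omega>) \<partial>M) = (\<integral>p. h (fst p) (snd p) \<partial>distr M (borel \<Otimes>\<^sub>M borel) (\<lambda>\<omega>. (Y \<omega>, Z \<omega>)))"
    by (subst integral_distr[OF YZm hm]) simp
  also have "\<dots> = integral\<^sup>L (PY \<Otimes>\<^sub>M PZ) (\<lambda>(y, z). h y z)"
    by (simp add: YZ_distr case_prod_beta')
  also have "\<dots> = (\<integral>y. (\<integral>z. h y z \<partial>PZ) \<partial>PY)"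
    by (rule PP.integral_fst[OF ip, symmetric])
  also have "\<dots> = (\<integral>\<omega>. (\<integral>z. h (Y \<omega>) z \<partial>PZ) \<partial>M)"
    by (rule integral_distr[OF Y_meas Hm])
  finally show "(\<integral>\<omega>. h (Y \<omega>) (Z \<omega>) \<partial>M) = (\<integral>\<omega>. (\<integral>z. h (Y \<omega>) z \<partial>PZ) \<partial>M)" .
qed

lemma cond_exp_YZ:
  fixes h :: "real^'d \<Rightarrow> real^'q \<Rightarrow> real"
  assumes hm: "(\<lambda>p. h (fst p) (snd p)) \<in> borel_measurable (borel \<Otimes>\<^sub>M borel)"
    and hi: "integrable M (\<lambda>\<omega>. h (Y \<omega>) (Z \<omega>))"
  shows "AE \<omega> in M. real_cond_exp M Fv (\<lambda>\<omega>. h (Y \<omega>) (Z \<omega>)) \<omega> = (\<integral>z. h (Y \<omega>) z \<partial>PZ)"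
proof -
  interpret finite_measure_subalgebra M Fv
    by unfold_locales (rule Fv_subalg)
  interpret PZs: prob_space PZ by (rule PZ_prob)
  have Hm: "(\<lambda>y. \<integral>z. h y z \<partial>PZ) \<in> borel_measurable borel"
    by (rule sigma_finite_measure.borel_measurable_lebesgue_integral[OF PZ_sf])
       (use hm in \<open>simp add: case_prod_beta' measurable_cong_sets[OF sets_pair_measure_cong[OF refl sets_PZ] refl]\<close>)
  show ?thesis
  proof (rule real_cond_exp_charact)
    show "integrable M (\<lambda>\<omega>. h (Y \<omega>) (Z \<omega>))" by (rule hi)
    show "integrable M (\<lambda>\<omega>. \<integral>z. h (Y \<omega>) z \<partial>PZ)" by (rule integral_YZ(1)[OF hm hi])
    show "(\<lambda>\<omega>. \<integral>z. h (Y \<omega>) z \<partial>PZ) \<in> borel_measurable Fv"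
      by (rule measurable_compose[OF Y_Fv_meas Hm])
    fix A assume A: "A \<in> sets Fv"
    then obtain B where B: "B \<in> sets borel" and AB: "A = Y -` B \<inter> space M"
      unfolding Fv_def by (subst (asm) sets_vimage_algebra2) auto
    have Bm: "(\<lambda>p. indicator B (fst p) * h (fst p) (snd p)) \<in> borel_measurable (borel \<Otimes>\<^sub>M borel)"
      using B hm by measurable
    have iB: "integrable M (\<lambda>\<omega>. indicator B (Y \<omega>) * h (Y \<omega>) (Z \<omega>))"
    proof -
      have i1: "integrable M (\<lambda>\<omega>. h (Y \<omega>) (Z \<omega>) * indicator (Y -` B \<inter> space M) \<omega>)"
        by (rule integrable_real_mult_indicator) (use hi B in auto)
      have e: "\<And>\<omega>. \<omega> \<in> space M \<Longrightarrow> h (Y \<omega>) (Z \<omega>) * indicator (Y -` B \<inter> space M) \<omega> = indicator B (Y \<omega>) * h (Y \<omega>) (Z \<omega>)"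
        by (auto simp: indicator_def)
      show ?thesis by (rule iffD1[OF Bochner_Integration.integrable_cong[OF refl e] i1])
    qed
    have "(\<integral>\<omega>\<in>A. h (Y \<omega>) (Z \<omega>) \<partial>M) = (\<integral>\<omega>. indicator B (Y \<omega>) * h (Y \<omega>) (Z \<omega>) \<partial>M)"
      unfolding set_lebesgue_integral_def AB
      by (rule Bochner_Integration.integral_cong[OF refl]) (auto simp: indicator_def)
    also have "\<dots> = (\<integral>\<omega>. (\<integral>z. indicator B (Y \<omega>) * h (Y \<omega>) z \<partial>PZ) \<partial>M)"
      by (rule integral_YZ(2)[OF Bm iB])
    also have "\<dots> = (\<integral>\<omega>. indicator B (Y \<omega>) * (\<integral>z. h (Y \<omega>) z \<partial>PZ) \<partial>M)"
      by simp
    also have "\<dots> = (\<integral>\<omega>\<in>A. (\<integral>z. h (Y \<omega>) z \<partial>PZ) \<partial>M)"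
      unfolding set_lebesgue_integral_def AB
      by (rule Bochner_Integration.integral_cong[OF refl]) (auto simp: indicator_def)
    finally show "(\<integral>\<omega>\<in>A. h (Y \<omega>) (Z \<omega>) \<partial>M) = (\<integral>\<omega>\<in>A. (\<integral>z. h (Y \<omega>) z \<partial>PZ) \<partial>M)" .
  qed
qed

end

context nested begin

definition "mm y = (\<integral>z. \<phi> y z \<partial>PZ)"
definition "\<psi> y z = \<phi> y z - mm y"
definition "vv y = (\<integral>z. (\<psi> y z)^2 \<partial>PZ)"
definition "good y \<longleftrightarrow> (\<integral>\<^sup>+z. ennreal ((\<phi> y z)^2) \<partial>PZ) < \<infinity>"

lemma mm_meas[measurable]: "mm \<in> borel_measurable borel"
  unfolding mm_def
  by (rule sigma_finite_measure.borel_measurable_lebesgue_integral[OF PZ_sf])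
     (use phi2_meas in \<open>simp add: case_prod_beta' measurable_cong_sets[OF sets_pair_measure_cong[OF refl sets_PZ] refl]\<close>)

lemma psi_meas: "(\<lambda>p. \<psi> (fst p) (snd p)) \<in> borel_measurable (borel \<Otimes>\<^sub>M borel)"
  unfolding \<psi>_def using phi2_meas by measurable

lemma psi2_meas: "(\<lambda>p. (\<psi> (fst p) (snd p))^2) \<in> borel_measurable (borel \<Otimes>\<^sub>M borel)"
  using psi_meas by measurable

lemma vv_meas[measurable]: "vv \<in> borel_measurable borel"
  unfolding vv_def
  by (rule sigma_finite_measure.borel_measurable_lebesgue_integral[OF PZ_sf])
     (use psi2_meas in \<open>simp add: case_prod_beta' measurable_cong_sets[OF sets_pair_measure_cong[OF refl sets_PZ] refl]\<close>)

lemma vv_nonneg: "vv y \<ge> 0"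
  unfolding vv_def by (rule integral_nonneg_AE) auto

lemma good_meas: "{y \<in> space borel. good y} \<in> sets borel"
proof -
  have "(\<lambda>p. ennreal ((\<phi> (fst p) (snd p))^2)) \<in> borel_measurable (borel \<Otimes>\<^sub>M PZ)"
    using phi2_meas by (simp add: measurable_cong_sets[OF sets_pair_measure_cong[OF refl sets_PZ] refl])
  from sigma_finite_measure.borel_measurable_nn_integral_fst[OF PZ_sf this]
  have "(\<lambda>y. \<integral>\<^sup>+z. ennreal ((\<phi> y z)^2) \<partial>PZ) \<in> borel_measurable borel" by simp
  then show ?thesis unfolding good_def by measurable
qed

lemma AE_good: "AE \<omega> in M. good (Y \<omega>)"
proof -
  interpret PP: pair_sigma_finite PY PZ by (rule PYZ_sigma)
  have YZm: "(\<lambda>\<omega>. (Y \<omega>, Z \<omega>)) \<in> measurable M (borel \<Otimes>\<^sub>M borel)" by measurable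
  have fm: "(\<lambda>p. ennreal ((\<phi> (fst p) (snd p))^2)) \<in> borel_measurable (borel \<Otimes>\<^sub>M borel)"
    using phi2_meas by measurable
  have fm': "(\<lambda>p. ennreal ((\<phi> (fst p) (snd p))^2)) \<in> borel_measurable (PY \<Otimes>\<^sub>M PZ)"
    using fm by (simp add: measurable_cong_sets[OF sets_pair_measure_cong[OF sets_distr sets_PZ] refl])
  have "(\<integral>\<^sup>+\<omega>. ennreal ((\<phi> (Y \<omega>) (Z \<omega>))^2) \<partial>M) \<noteq> \<infinity>"
    using integrableD(2)[OF L2] by simp
  also have "(\<integral>\<^sup>+\<omega>. ennreal ((\<phi> (Y \<omega>) (Z \<omega>))^2) \<partial>M)
      = integral\<^sup>N (distr M (borel \<Otimes>\<^sub>M borel) (\<lambda>\<omega>. (Y \<omega>, Z \<omega>))) (\<lambda>p. ennreal ((\<phi> (fst p) (snd p))^2))"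
    by (subst nn_integral_distr[OF YZm]) (use fm in simp_all)
  also have "\<dots> = integral\<^sup>N (PY \<Otimes>\<^sub>M PZ) (\<lambda>p. ennreal ((\<phi> (fst p) (snd p))^2))"
    by (simp add: YZ_distr)
  also have "\<dots> = (\<integral>\<^sup>+y. (\<integral>\<^sup>+z. ennreal ((\<phi> y z)^2) \<partial>PZ) \<partial>PY)"
    by (subst PP.M2.nn_integral_fst[OF fm', symmetric]) simp
  finally have fin: "(\<integral>\<^sup>+y. (\<integral>\<^sup>+z. ennreal ((\<phi> y z)^2) \<partial>PZ) \<partial>PY) \<noteq> \<infinity>" .
  have im: "(\<lambda>y. \<integral>\<^sup>+z. ennreal ((\<phi> y z)^2) \<partial>PZ) \<in> borel_measurable PY"
    using PP.M2.borel_measurable_nn_integral_fst[OF fm'] by simp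
  have "AE y in PY. (\<integral>\<^sup>+z. ennreal ((\<phi> y z)^2) \<partial>PZ) \<noteq> \<infinity>"
    by (rule nn_integral_PInf_AE[OF im fin])
  then have "AE y in PY. good y" by (simp add: good_def top.not_eq_extremum)
  then show ?thesis
    by (subst (asm) AE_distr_iff[OF Y_meas good_meas]) simp
qed

lemma good_props:
  assumes "good y"
  shows "integrable PZ (\<lambda>z. (\<phi> y z)^2)" "integrable PZ (\<phi> y)"
    "integrable PZ (\<psi> y)" "integrable PZ (\<lambda>z. (\<psi> y z)^2)"
    "(\<integral>z. \<psi> y z \<partial>PZ) = 0"
proof -
  interpret PZs: prob_space PZ by (rule PZ_prob)
  have m1[measurable]: "\<phi> y \<in> borel_measurable PZ"
    using measurable_Pair2[OF phi2_meas, of y] by simp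
  show i2: "integrable PZ (\<lambda>z. (\<phi> y z)^2)"
    by (rule integrableI_nonneg) (use assms in \<open>auto simp: good_def\<close>)
  show i1: "integrable PZ (\<phi> y)"
    by (rule PZs.square_integrable_imp_integrable[OF m1 i2])
  show i3: "integrable PZ (\<psi> y)" unfolding \<psi>_def using i1 by simp
  have "integrable PZ (\<lambda>z. (\<phi> y z)\<^sup>2 + (mm y)\<^sup>2 - 2 * \<phi> y z * mm y)"
    using i1 i2 by (intro Bochner_Integration.integrable_diff Bochner_Integration.integrable_add
        integrable_mult_left integrable_mult_right PZs.integrable_const)
  then show "integrable PZ (\<lambda>z. (\<psi> y z)^2)"
    by (simp add: \<psi>_def power2_diff)
  show "(\<integral>z. \<psi> y z \<partial>PZ) = 0"
    unfolding \<psi>_def using i1 PZs.prob_space by (simp add: mm_def)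
qed

abbreviation "X0 \<equiv> real_cond_exp M Fv (\<lambda>\<omega>. \<phi> (Y \<omega>) (Z \<omega>))"

lemma phiYZ_int: "integrable M (\<lambda>\<omega>. \<phi> (Y \<omega>) (Z \<omega>))"
  by (rule square_integrable_imp_integrable[OF _ L2]) simp

lemma X0_eq: "AE \<omega> in M. X0 \<omega> = mm (Y \<omega>)"
  using cond_exp_YZ[OF phi2_meas phiYZ_int] by (simp add: mm_def)

lemma V0_eq: "AE \<omega> in M. real_cond_var M Fv (\<lambda>\<omega>. \<phi> (Y \<omega>) (Z \<omega>)) \<omega> = vv (Y \<omega>)"
proof -
  interpret finite_measure_subalgebra M Fv
    by unfold_locales (rule Fv_subalg)
  have X0sq: "integrable M (\<lambda>\<omega>. (X0 \<omega>)^2)"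
  proof (rule integrable_convex_cond_exp[where I=UNIV and q="\<lambda>x. x^2" and a=0 and b=0])
    show "integrable M (\<lambda>\<omega>. \<phi> (Y \<omega>) (Z \<omega>))" by (rule phiYZ_int)
    show "integrable M (\<lambda>\<omega>. (\<phi> (Y \<omega>) (Z \<omega>))^2)" by (rule L2)
    show "convex_on UNIV (\<lambda>x::real. x^2)" using convex_power2 by simp
  qed simp_all
  have i1: "integrable M (\<lambda>\<omega>. (\<phi> (Y \<omega>) (Z \<omega>) - X0 \<omega>)^2)"
  proof -
    have "integrable M (\<lambda>\<omega>. 2 * (\<phi> (Y \<omega>) (Z \<omega>))^2 + 2 * (X0 \<omega>)^2)"
      using L2 X0sq by simp
    then show ?thesis
    proof (rule Bochner_Integration.integrable_bound)
      show "(\<lambda>\<omega>. (\<phi> (Y \<omega>) (Z \<omega>) - X0 \<omega>)^2) \<in> borel_measurable M" by measurable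
      show "AE \<omega> in M. norm ((\<phi> (Y \<omega>) (Z \<omega>) - X0 \<omega>)^2) \<le> norm (2 * (\<phi> (Y \<omega>) (Z \<omega>))^2 + 2 * (X0 \<omega>)^2)"
      proof (rule AE_I2)
        fix \<omega>
        have "(\<phi> (Y \<omega>) (Z \<omega>) - X0 \<omega>)^2 \<le> 2 * (\<phi> (Y \<omega>) (Z \<omega>))^2 + 2 * (X0 \<omega>)^2"
          proof -
          have e: "2 * (\<phi> (Y \<omega>) (Z \<omega>))^2 + 2 * (X0 \<omega>)^2 - (\<phi> (Y \<omega>) (Z \<omega>) - X0 \<omega>)^2 = (\<phi> (Y \<omega>) (Z \<omega>) + X0 \<omega>)^2"
            by (simp add: power2_eq_square algebra_simps)
          show ?thesis using e zero_le_power2[of "\<phi> (Y \<omega>) (Z \<omega>) + X0 \<omega>"] by linarith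
        qed
        then show "norm ((\<phi> (Y \<omega>) (Z \<omega>) - X0 \<omega>)^2) \<le> norm (2 * (\<phi> (Y \<omega>) (Z \<omega>))^2 + 2 * (X0 \<omega>)^2)"
          by simp
      qed
    qed
  qed
  have ae: "AE \<omega> in M. (\<phi> (Y \<omega>) (Z \<omega>) - X0 \<omega>)^2 = (\<psi> (Y \<omega>) (Z \<omega>))^2"
    using X0_eq by (auto simp: \<psi>_def)
  have psm: "(\<lambda>\<omega>. (\<psi> (Y \<omega>) (Z \<omega>))^2) \<in> borel_measurable M"
    using measurable_compose[OF _ psi2_meas, of "\<lambda>\<omega>. (Y \<omega>, Z \<omega>)"] by simp
  have i2: "integrable M (\<lambda>\<omega>. (\<psi> (Y \<omega>) (Z \<omega>))^2)"
    using integrable_cong_AE[OF _ psm ae] i1 by simp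
  have "AE \<omega> in M. real_cond_var M Fv (\<lambda>\<omega>. \<phi> (Y \<omega>) (Z \<omega>)) \<omega>
      = real_cond_exp M Fv (\<lambda>\<omega>. (\<psi> (Y \<omega>) (Z \<omega>))^2) \<omega>"
    unfolding real_cond_var_def by (rule real_cond_exp_cong[OF ae]) (simp_all add: psm)
  moreover have "AE \<omega> in M. real_cond_exp M Fv (\<lambda>\<omega>. (\<psi> (Y \<omega>) (Z \<omega>))^2) \<omega> = vv (Y \<omega>)"
    using cond_exp_YZ[OF psi2_meas i2] by (simp add: vv_def)
  ultimately show ?thesis by auto
qed

end

context nested begin

definition "avg n \<omega> = (1 / real n) * (\<Sum>k\<in>{1..n}. \<phi> (Y \<omega>) (Zs k \<omega>))"
definition "U n \<omega> = avg n \<omega> - mm (Y \<omega>)"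

lemma avg_meas[measurable]: "avg n \<in> borel_measurable M"
  unfolding avg_def by measurable

lemma U_meas[measurable]: "U n \<in> borel_measurable M"
  unfolding U_def by measurable

lemma U_sum: "n \<ge> 1 \<Longrightarrow> U n \<omega> = (\<Sum>k\<in>{1..n}. (1 / real n) * \<psi> (Y \<omega>) (Zs k \<omega>))"
proof -
  assume n: "n \<ge> 1"
  have "(\<Sum>k\<in>{1..n}. (1 / real n) * \<psi> (Y \<omega>) (Zs k \<omega>)) = (1 / real n) * (\<Sum>k\<in>{1..n}. \<psi> (Y \<omega>) (Zs k \<omega>))"
    by (rule sum_distrib_left[symmetric])
  also have "(\<Sum>k\<in>{1..n}. \<psi> (Y \<omega>) (Zs k \<omega>)) = (\<Sum>k\<in>{1..n}. \<phi> (Y \<omega>) (Zs k \<omega>)) - real n * mm (Y \<omega>)"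
    unfolding \<psi>_def by (simp add: sum_subtractf)
  also have "(1 / real n) * ((\<Sum>k\<in>{1..n}. \<phi> (Y \<omega>) (Zs k \<omega>)) - real n * mm (Y \<omega>)) = U n \<omega>"
    using n by (simp add: U_def avg_def right_diff_distrib)
  finally show ?thesis ..
qed

lemma psi_meas_z[measurable]: "\<psi> y \<in> borel_measurable borel"
  using measurable_Pair2[OF psi_meas, of y] by simp

lemma char_psi: "char (distr PZ borel (\<psi> y)) s = (\<integral>z. iexp (s * \<psi> y z) \<partial>PZ)"
  unfolding char_def by (rule integral_distr) simp_all

lemma char_psi_meas[measurable]: "(\<lambda>y. char (distr PZ borel (\<psi> y)) s) \<in> borel_measurable borel"
proof -
  have "(\<lambda>p. iexp (s * \<psi> (fst p) (snd p))) \<in> borel_measurable (borel \<Otimes>\<^sub>M borel)"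
    using psi_meas by measurable
  then have "(\<lambda>(y, z). iexp (s * \<psi> y z)) \<in> borel_measurable (borel \<Otimes>\<^sub>M PZ)"
    by (simp add: case_prod_beta' measurable_cong_sets[OF sets_pair_measure_cong[OF refl sets_PZ] refl])
  from sigma_finite_measure.borel_measurable_lebesgue_integral[OF PZ_sf this]
  show ?thesis by (simp add: char_psi)
qed

lemma char_sum:
  fixes g :: "real^'d \<Rightarrow> complex" and c :: "nat \<Rightarrow> real"
  assumes gm[measurable]: "g \<in> borel_measurable borel" and gb: "\<And>y. norm (g y) \<le> 1"
  shows "(\<integral>\<omega>. g (Y \<omega>) * iexp (t * (\<Sum>k\<in>{1..n}. c k * \<psi> (Y \<omega>) (Zs k \<omega>))) \<partial>M)
     = (\<integral>\<omega>. g (Y \<omega>) * (\<Prod>k\<in>{1..n}. char (distr PZ borel (\<psi> (Y \<omega>))) (t * c k)) \<partial>M)"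
proof -
  have e: "iexp (t * (\<Sum>k\<in>{1..n}. c k * \<psi> y (zz k))) = (\<Prod>k\<in>{1..n}. iexp ((t * c k) * \<psi> y (zz k)))" for y zz
  proof -
    have "\<i> * complex_of_real (t * (\<Sum>k\<in>{1..n}. c k * \<psi> y (zz k))) = (\<Sum>k\<in>{1..n}. \<i> * complex_of_real ((t * c k) * \<psi> y (zz k)))"
      by (simp add: sum_distrib_left mult.assoc)
    then show ?thesis by (simp add: exp_sum)
  qed
  have "(\<integral>\<omega>. g (Y \<omega>) * iexp (t * (\<Sum>k\<in>{1..n}. c k * \<psi> (Y \<omega>) (Zs k \<omega>))) \<partial>M)
      = (\<integral>\<omega>. g (Y \<omega>) * (\<Prod>k\<in>{1..n}. (\<lambda>k y z. iexp ((t * c k) * \<psi> y z)) k (Y \<omega>) (Zs k \<omega>)) \<partial>M)"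
    by (rule Bochner_Integration.integral_cong[OF refl]) (simp only: e)
  also have "\<dots> = (\<integral>\<omega>. g (Y \<omega>) * (\<Prod>k\<in>{1..n}. \<integral>z. (\<lambda>k y z. iexp ((t * c k) * \<psi> y z)) k (Y \<omega>) z \<partial>PZ) \<partial>M)"
  proof (rule prodform[OF gm gb])
    show "(\<lambda>p. iexp (t * c k * \<psi> (fst p) (snd p))) \<in> borel_measurable (borel \<Otimes>\<^sub>M borel)" for k
      using psi_meas by measurable
    show "norm (iexp (t * c k * \<psi> y z)) \<le> 1" for k y z by simp
  qed
  also have "\<dots> = (\<integral>\<omega>. g (Y \<omega>) * (\<Prod>k\<in>{1..n}. char (distr PZ borel (\<psi> (Y \<omega>))) (t * c k)) \<partial>M)"
    by (simp add: char_psi)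
  finally show ?thesis .
qed

lemma charU: "n \<ge> 1 \<Longrightarrow> char (distr M borel (U n)) t = (\<integral>\<omega>. (char (distr PZ borel (\<psi> (Y \<omega>))) (t / real n)) ^ n \<partial>M)"
proof -
  assume n: "n \<ge> 1"
  have "char (distr M borel (U n)) t = (\<integral>\<omega>. iexp (t * U n \<omega>) \<partial>M)"
    unfolding char_def by (rule integral_distr) simp_all
  also have "\<dots> = (\<integral>\<omega>. (\<lambda>_. 1) (Y \<omega>) * iexp (t * (\<Sum>k\<in>{1..n}. (1 / real n) * \<psi> (Y \<omega>) (Zs k \<omega>))) \<partial>M)"
    using n by (simp add: U_sum)
  also have "\<dots> = (\<integral>\<omega>. (\<lambda>_. 1) (Y \<omega>) * (\<Prod>k\<in>{1..n}. char (distr PZ borel (\<psi> (Y \<omega>))) (t * (1 / real n))) \<partial>M)"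
    by (rule char_sum) simp_all
  also have "\<dots> = (\<integral>\<omega>. (char (distr PZ borel (\<psi> (Y \<omega>))) (t / real n)) ^ n \<partial>M)"
    by simp
  finally show ?thesis .
qed

lemma psi_distr_props:
  assumes "good y"
  shows "real_distribution (distr PZ borel (\<psi> y))"
    "integrable (distr PZ borel (\<psi> y)) (\<lambda>x. x)"
    "integral\<^sup>L (distr PZ borel (\<psi> y)) (\<lambda>x. x) = 0"
    "integrable (distr PZ borel (\<psi> y)) (\<lambda>x. x^2)"
    "integral\<^sup>L (distr PZ borel (\<psi> y)) (\<lambda>x. x^2) = vv y"
proof -
  interpret PZs: prob_space PZ by (rule PZ_prob)
  note gp = good_props[OF assms]
  show "real_distribution (distr PZ borel (\<psi> y))" by (rule PZs.real_distribution_distr) simp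
  show "integrable (distr PZ borel (\<psi> y)) (\<lambda>x. x)"
    by (subst integrable_distr_eq) (use gp in simp_all)
  show "integral\<^sup>L (distr PZ borel (\<psi> y)) (\<lambda>x. x) = 0"
    by (subst integral_distr) (use gp in simp_all)
  show "integrable (distr PZ borel (\<psi> y)) (\<lambda>x. x^2)"
    by (subst integrable_distr_eq) (use gp in simp_all)
  show "integral\<^sup>L (distr PZ borel (\<psi> y)) (\<lambda>x. x^2) = vv y"
    by (subst integral_distr) (simp_all add: vv_def)
qed

lemma char_psi_le1: "norm (char (distr PZ borel (\<psi> y)) s) \<le> 1"
proof -
  interpret PZs: prob_space PZ by (rule PZ_prob)
  interpret R: real_distribution "distr PZ borel (\<psi> y)" by (rule PZs.real_distribution_distr) simp
  show ?thesis by (rule R.cmod_char_le_1)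
qed

lemma charU_lim: "(\<lambda>n. char (distr M borel (U n)) t) \<longlonglongrightarrow> 1"
proof -
  have lim: "(\<lambda>n. \<integral>\<omega>. (char (distr PZ borel (\<psi> (Y \<omega>))) (t / real n)) ^ n \<partial>M) \<longlonglongrightarrow> (\<integral>\<omega>. 1 \<partial>M)"
  proof (rule integral_dominated_convergence[where w="\<lambda>_. 1"])
    show "(\<lambda>\<omega>. 1::complex) \<in> borel_measurable M" by simp
    show "(\<lambda>\<omega>. (char (distr PZ borel (\<psi> (Y \<omega>))) (t / real n)) ^ n) \<in> borel_measurable M" for n
      by measurable
    show "integrable M (\<lambda>_. 1::real)" by simp
    show "AE \<omega> in M. norm ((char (distr PZ borel (\<psi> (Y \<omega>))) (t / real n)) ^ n) \<le> 1" for n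
      by (intro AE_I2) (simp add: norm_power power_le_one char_psi_le1)
    show "AE \<omega> in M. (\<lambda>n. (char (distr PZ borel (\<psi> (Y \<omega>))) (t / real n)) ^ n) \<longlonglongrightarrow> 1"
      using AE_good
    proof (elim AE_mp, intro AE_I2 impI)
      fix \<omega> assume g: "good (Y \<omega>)"
      note P = psi_distr_props[OF g]
      have s0: "(\<lambda>n. t / real n) \<longlonglongrightarrow> 0"
        by (intro tendsto_divide_0[OF tendsto_const] filterlim_real_sequentially filterlim_at_top_imp_at_infinity)
      have "(\<lambda>n. t^2 / real n) \<longlonglongrightarrow> 0"
        by (intro tendsto_divide_0[OF tendsto_const] filterlim_real_sequentially filterlim_at_top_imp_at_infinity)
      moreover have "real n * (t / real n)^2 = t^2 / real n" for n
        by (cases "n = 0") (simp_all add: power2_eq_square)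
      ultimately have as: "(\<lambda>n. real n * (t / real n)^2) \<longlonglongrightarrow> 0" by simp
      from char_pow_lim[OF P(1) P(2) P(3) P(4) s0 as]
      show "(\<lambda>n. (char (distr PZ borel (\<psi> (Y \<omega>))) (t / real n)) ^ n) \<longlonglongrightarrow> 1" by simp
    qed
  qed
  have "\<forall>\<^sub>F n in sequentially. (\<integral>\<omega>. (char (distr PZ borel (\<psi> (Y \<omega>))) (t / real n)) ^ n \<partial>M) = char (distr M borel (U n)) t"
    using eventually_ge_at_top[of 1] by eventually_elim (simp add: charU)
  from Lim_transform_eventually[OF lim this] show ?thesis by (simp add: prob_space)
qed

end

lemma real_distribution_return0: "real_distribution (return borel (0::real))"
  unfolding real_distribution_def real_distribution_axioms_def
  by (auto intro!: prob_space_return)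

lemma char_return0: "char (return borel (0::real)) t = 1"
  unfolding char_def by (simp add: integral_return)

lemma cdf_return0: "cdf (return borel (0::real)) x = (if 0 \<le> x then 1 else 0)"
  unfolding cdf_def by (simp add: measure_return)

lemma isCont_cdf_return0: "x \<noteq> 0 \<Longrightarrow> isCont (cdf (return borel (0::real))) x"
proof -
  assume x: "x \<noteq> 0"
  interpret R: real_distribution "return borel (0::real)" by (rule real_distribution_return0)
  show ?thesis using x by (subst R.isCont_cdf) (simp add: measure_return)
qed

context nested begin

lemma U_weak: "weak_conv_m (\<lambda>n. distr M borel (U n)) (return borel 0)"
  by (rule levy_continuity) (simp_all add: real_distribution_return0 char_return0 charU_lim)

lemma cdf_U: "cdf (distr M borel (U n)) x = prob {\<omega> \<in> space M. U n \<omega> \<le> x}"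
  unfolding cdf_def by (subst measure_distr) (auto intro!: arg_cong[where f=prob])

lemma U_le_lim: "x \<noteq> 0 \<Longrightarrow> (\<lambda>n. prob {\<omega> \<in> space M. U n \<omega> \<le> x}) \<longlonglongrightarrow> (if 0 \<le> x then 1 else 0)"
  using U_weak isCont_cdf_return0[of x]
  unfolding weak_conv_m_def weak_conv_def by (simp add: cdf_U cdf_return0)

lemma U_prob: assumes d: "\<delta> > 0" shows "(\<lambda>n. prob {\<omega> \<in> space M. \<delta> \<le> \<bar>U n \<omega>\<bar>}) \<longlonglongrightarrow> 0"
proof -
  have l1: "(\<lambda>n. prob {\<omega> \<in> space M. U n \<omega> \<le> - \<delta>}) \<longlonglongrightarrow> 0"
    using U_le_lim[of "-\<delta>"] d by simp
  have l2: "(\<lambda>n. prob {\<omega> \<in> space M. U n \<omega> \<le> \<delta> / 2}) \<longlonglongrightarrow> 1"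
    using U_le_lim[of "\<delta>/2"] d by simp
  have "(\<lambda>n. prob {\<omega> \<in> space M. U n \<omega> \<le> - \<delta>} + (1 - prob {\<omega> \<in> space M. U n \<omega> \<le> \<delta> / 2})) \<longlonglongrightarrow> 0 + (1 - 1)"
    by (intro tendsto_intros l1 l2)
  then have l3: "(\<lambda>n. prob {\<omega> \<in> space M. U n \<omega> \<le> - \<delta>} + (1 - prob {\<omega> \<in> space M. U n \<omega> \<le> \<delta> / 2})) \<longlonglongrightarrow> 0"
    by simp
  have bnd: "norm (prob {\<omega> \<in> space M. \<delta> \<le> \<bar>U n \<omega>\<bar>}) \<le> prob {\<omega> \<in> space M. U n \<omega> \<le> - \<delta>} + (1 - prob {\<omega> \<in> space M. U n \<omega> \<le> \<delta> / 2})" for n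
  proof -
    have "{\<omega> \<in> space M. \<delta> \<le> \<bar>U n \<omega>\<bar>} \<subseteq> {\<omega> \<in> space M. U n \<omega> \<le> - \<delta>} \<union> (space M - {\<omega> \<in> space M. U n \<omega> \<le> \<delta> / 2})"
      using d by auto
    then have "prob {\<omega> \<in> space M. \<delta> \<le> \<bar>U n \<omega>\<bar>} \<le> prob ({\<omega> \<in> space M. U n \<omega> \<le> - \<delta>} \<union> (space M - {\<omega> \<in> space M. U n \<omega> \<le> \<delta> / 2}))"
      by (intro finite_measure_mono) auto
    also have "\<dots> \<le> prob {\<omega> \<in> space M. U n \<omega> \<le> - \<delta>} + prob (space M - {\<omega> \<in> space M. U n \<omega> \<le> \<delta> / 2})"
      by (intro measure_Un_le) auto
    also have "prob (space M - {\<omega> \<in> space M. U n \<omega> \<le> \<delta> / 2}) = 1 - prob {\<omega> \<in> space M. U n \<omega> \<le> \<delta> / 2}"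
      by (intro prob_compl) auto
    finally show ?thesis by simp
  qed
  show ?thesis by (rule Lim_null_comparison[OF always_eventually[OF allI[OF bnd]] l3])
qed

definition "Qset \<xi> n = {\<omega> \<in> space M. mm (Y \<omega>) \<noteq> \<xi> \<and> \<bar>mm (Y \<omega>) - \<xi>\<bar> \<le> \<bar>U n \<omega>\<bar>}"

lemma Qset_sets[measurable]: "Qset \<xi> n \<in> sets M"
  unfolding Qset_def by measurable

lemma Q_lim: "(\<lambda>n. prob (Qset \<xi> n)) \<longlonglongrightarrow> 0"
proof (rule tendstoI)
  fix e :: real assume e: "e > 0"
  define A where "A j = {\<omega> \<in> space M. 0 < \<bar>mm (Y \<omega>) - \<xi>\<bar> \<and> \<bar>mm (Y \<omega>) - \<xi>\<bar> < 1 / Suc j}" for j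
  have Am: "range A \<subseteq> sets M" unfolding A_def by auto
  have Ad: "decseq A"
  proof (rule decseq_SucI)
    fix j
    have "1 / real (Suc (Suc j)) \<le> 1 / real (Suc j)" by (simp add: frac_le)
    then show "A (Suc j) \<subseteq> A j" unfolding A_def by fastforce
  qed
  have Ai: "(\<Inter>j. A j) = {}"
  proof (rule ccontr)
    assume "(\<Inter>j. A j) \<noteq> {}"
    then obtain \<omega> where w: "\<And>j. \<omega> \<in> A j" by blast
    then have p: "0 < \<bar>mm (Y \<omega>) - \<xi>\<bar>" unfolding A_def by auto
    obtain j where "1 / real (Suc j) < \<bar>mm (Y \<omega>) - \<xi>\<bar>"
      using reals_Archimedean[OF p] by (auto simp: field_simps)
    with w[of j] show False unfolding A_def by auto
  qed
  have "(\<lambda>j. prob (A j)) \<longlonglongrightarrow> 0"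
    using finite_Lim_measure_decseq[OF Am Ad] Ai by simp
  then have "\<forall>\<^sub>F j in sequentially. prob (A j) < e / 2"
    using e by (auto simp: tendsto_iff dist_real_def dest!: spec[of _ "e/2"] elim!: eventually_mono)
  then obtain j where j: "prob (A j) < e / 2" by (meson eventually_sequentially order_refl)
  define \<delta> :: real where "\<delta> = 1 / Suc j"
  have d: "\<delta> > 0" unfolding \<delta>_def by simp
  from U_prob[OF d] have "\<forall>\<^sub>F n in sequentially. prob {\<omega> \<in> space M. \<delta> \<le> \<bar>U n \<omega>\<bar>} < e / 2"
    using e by (auto simp: tendsto_iff dist_real_def dest!: spec[of _ "e/2"] elim!: eventually_mono)
  then show "\<forall>\<^sub>F n in sequentially. dist (prob (Qset \<xi> n)) 0 < e"
  proof (elim eventually_mono)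
    fix n assume n: "prob {\<omega> \<in> space M. \<delta> \<le> \<bar>U n \<omega>\<bar>} < e / 2"
    have "Qset \<xi> n \<subseteq> A j \<union> {\<omega> \<in> space M. \<delta> \<le> \<bar>U n \<omega>\<bar>}"
      unfolding Qset_def A_def \<delta>_def by auto
    then have "prob (Qset \<xi> n) \<le> prob (A j \<union> {\<omega> \<in> space M. \<delta> \<le> \<bar>U n \<omega>\<bar>})"
      using Am by (intro finite_measure_mono) auto
    also have "\<dots> \<le> prob (A j) + prob {\<omega> \<in> space M. \<delta> \<le> \<bar>U n \<omega>\<bar>}"
      using Am by (intro measure_Un_le) auto
    finally show "dist (prob (Qset \<xi> n)) 0 < e" using j n by simp
  qed
qed

end

context nested begin

definition "Ev \<xi> n n' \<omega> = indicator {y. \<xi> < mm y} (Y \<omega>) * (sqrt (real n') * (avg n' \<omega> - avg n \<omega>))"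

lemma Ev_meas[measurable]: "Ev \<xi> n n' \<in> borel_measurable M"
  unfolding Ev_def by measurable

abbreviation "chY \<omega> s \<equiv> char (distr PZ borel (\<psi> (Y \<omega>))) s"

lemma avg_diff:
  assumes n: "1 \<le> n" "n \<le> n'"
  shows "avg n' \<omega> - avg n \<omega> = (\<Sum>k\<in>{1..n'}. (1 / real n' - (if k \<in> {1..n} then 1 / real n else 0)) * \<psi> (Y \<omega>) (Zs k \<omega>))"
proof -
  have "avg n' \<omega> - avg n \<omega> = U n' \<omega> - U n \<omega>" by (simp add: U_def)
  also have "\<dots> = (\<Sum>k\<in>{1..n'}. (1 / real n') * \<psi> (Y \<omega>) (Zs k \<omega>)) - (\<Sum>k\<in>{1..n}. (1 / real n) * \<psi> (Y \<omega>) (Zs k \<omega>))"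
    using n by (simp add: U_sum)
  also have "(\<Sum>k\<in>{1..n}. (1 / real n) * \<psi> (Y \<omega>) (Zs k \<omega>)) = (\<Sum>k\<in>{1..n'} \<inter> {1..n}. (1 / real n) * \<psi> (Y \<omega>) (Zs k \<omega>))"
    using n by (intro sum.cong) auto
  also have "\<dots> = (\<Sum>k\<in>{1..n'}. (if k \<in> {1..n} then (1 / real n) * \<psi> (Y \<omega>) (Zs k \<omega>) else 0))"
    by (rule sum.inter_restrict) simp
  also have "(\<Sum>k\<in>{1..n'}. (1 / real n') * \<psi> (Y \<omega>) (Zs k \<omega>)) - \<dots> = (\<Sum>k\<in>{1..n'}. (1 / real n' - (if k \<in> {1..n} then 1 / real n else 0)) * \<psi> (Y \<omega>) (Zs k \<omega>))"
    unfolding sum_subtractf[symmetric] by (intro sum.cong) (auto simp: left_diff_distrib)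
  finally show ?thesis .
qed

lemma charE:
  assumes n: "1 \<le> n" "n \<le> n'"
  shows "char (distr M borel (Ev \<xi> n n')) t = (\<integral>\<omega>. (if \<xi> < mm (Y \<omega>) then
      chY \<omega> (t * sqrt (real n') * (1 / real n' - 1 / real n)) ^ n * chY \<omega> (t * sqrt (real n') * (1 / real n')) ^ (n' - n)
     else 1) \<partial>M)"
proof -
  define c where "c k = 1 / real n' - (if k \<in> {1..n} then 1 / real n else 0)" for k
  define g1 :: "real^'d \<Rightarrow> complex" where "g1 y = (if \<xi> < mm y then 1 else 0)" for y
  have g1m[measurable]: "g1 \<in> borel_measurable borel" unfolding g1_def by measurable
  have g1b: "norm (g1 y) \<le> 1" for y by (simp add: g1_def)
  have "char (distr M borel (Ev \<xi> n n')) t = (\<integral>\<omega>. iexp (t * Ev \<xi> n n' \<omega>) \<partial>M)"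
    unfolding char_def by (rule integral_distr) simp_all
  also have "\<dots> = (\<integral>\<omega>. g1 (Y \<omega>) * iexp ((t * sqrt (real n')) * (\<Sum>k\<in>{1..n'}. c k * \<psi> (Y \<omega>) (Zs k \<omega>))) + (1 - g1 (Y \<omega>)) \<partial>M)"
    by (rule Bochner_Integration.integral_cong[OF refl])
       (simp add: Ev_def g1_def avg_diff[OF n] c_def mult.assoc indicator_def)
  also have "\<dots> = (\<integral>\<omega>. g1 (Y \<omega>) * iexp ((t * sqrt (real n')) * (\<Sum>k\<in>{1..n'}. c k * \<psi> (Y \<omega>) (Zs k \<omega>))) \<partial>M) + (\<integral>\<omega>. (1 - g1 (Y \<omega>)) \<partial>M)"
  proof (rule Bochner_Integration.integral_add)
    show "integrable M (\<lambda>\<omega>. g1 (Y \<omega>) * iexp ((t * sqrt (real n')) * (\<Sum>k\<in>{1..n'}. c k * \<psi> (Y \<omega>) (Zs k \<omega>))))"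
    proof (rule bounded_integrable)
      show "prob_space M" by unfold_locales
      have [measurable]: "(\<lambda>\<omega>. \<psi> (Y \<omega>) (Zs k \<omega>)) \<in> borel_measurable M" for k
        using measurable_compose[OF _ psi_meas, of "\<lambda>\<omega>. (Y \<omega>, Zs k \<omega>)"] by simp
      show "(\<lambda>\<omega>. g1 (Y \<omega>) * iexp ((t * sqrt (real n')) * (\<Sum>k\<in>{1..n'}. c k * \<psi> (Y \<omega>) (Zs k \<omega>)))) \<in> borel_measurable M"
        by measurable
      show "norm (g1 (Y \<omega>) * iexp ((t * sqrt (real n')) * (\<Sum>k\<in>{1..n'}. c k * \<psi> (Y \<omega>) (Zs k \<omega>)))) \<le> 1" for \<omega>
        using g1b[of "Y \<omega>"] by (simp add: norm_mult)
    qed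
    show "integrable M (\<lambda>\<omega>. 1 - g1 (Y \<omega>))"
      by (rule bounded_integrable) (simp_all add: g1_def, unfold_locales)
  qed
  also have "(\<integral>\<omega>. g1 (Y \<omega>) * iexp ((t * sqrt (real n')) * (\<Sum>k\<in>{1..n'}. c k * \<psi> (Y \<omega>) (Zs k \<omega>))) \<partial>M)
      = (\<integral>\<omega>. g1 (Y \<omega>) * (\<Prod>k\<in>{1..n'}. chY \<omega> ((t * sqrt (real n')) * c k)) \<partial>M)"
    by (rule char_sum[OF g1m g1b])
  also have "(\<integral>\<omega>. g1 (Y \<omega>) * (\<Prod>k\<in>{1..n'}. chY \<omega> ((t * sqrt (real n')) * c k)) \<partial>M) + (\<integral>\<omega>. (1 - g1 (Y \<omega>)) \<partial>M)
     = (\<integral>\<omega>. g1 (Y \<omega>) * (\<Prod>k\<in>{1..n'}. chY \<omega> ((t * sqrt (real n')) * c k)) + (1 - g1 (Y \<omega>)) \<partial>M)"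
  proof (rule Bochner_Integration.integral_add[symmetric])
    show "integrable M (\<lambda>\<omega>. g1 (Y \<omega>) * (\<Prod>k\<in>{1..n'}. chY \<omega> ((t * sqrt (real n')) * c k)))"
    proof (rule bounded_integrable)
      show "prob_space M" by unfold_locales
      show "(\<lambda>\<omega>. g1 (Y \<omega>) * (\<Prod>k\<in>{1..n'}. chY \<omega> ((t * sqrt (real n')) * c k))) \<in> borel_measurable M"
        by measurable
      show "norm (g1 (Y \<omega>) * (\<Prod>k\<in>{1..n'}. chY \<omega> ((t * sqrt (real n')) * c k))) \<le> 1" for \<omega>
        unfolding norm_mult prod_norm[symmetric]
        by (intro mult_le_one prod_le_1 g1b char_psi_le1 norm_ge_zero prod_nonneg conjI)
    qed
    show "integrable M (\<lambda>\<omega>. 1 - g1 (Y \<omega>))"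
      by (rule bounded_integrable) (simp_all add: g1_def, unfold_locales)
  qed
  also have "\<dots> = (\<integral>\<omega>. (if \<xi> < mm (Y \<omega>) then
      chY \<omega> (t * sqrt (real n') * (1 / real n' - 1 / real n)) ^ n * chY \<omega> (t * sqrt (real n') * (1 / real n')) ^ (n' - n)
     else 1) \<partial>M)"
  proof (rule Bochner_Integration.integral_cong[OF refl])
    fix \<omega>
    have sp: "{1..n'} = {1..n + (n' - n)}" using n by simp
    have "(\<Prod>k\<in>{1..n'}. chY \<omega> ((t * sqrt (real n')) * c k))
        = (\<Prod>k\<in>{1..n}. chY \<omega> ((t * sqrt (real n')) * c k)) * (\<Prod>k\<in>{n+1..n + (n' - n)}. chY \<omega> ((t * sqrt (real n')) * c k))"
      unfolding sp by (rule prod.ub_add_nat) simp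
    also have "(\<Prod>k\<in>{1..n}. chY \<omega> ((t * sqrt (real n')) * c k)) = (\<Prod>k\<in>{1..n}. chY \<omega> (t * sqrt (real n') * (1 / real n' - 1 / real n)))"
      by (intro prod.cong) (auto simp: c_def)
    also have "\<dots> = chY \<omega> (t * sqrt (real n') * (1 / real n' - 1 / real n)) ^ n" by simp
    also have "(\<Prod>k\<in>{n+1..n + (n' - n)}. chY \<omega> ((t * sqrt (real n')) * c k)) = (\<Prod>k\<in>{n+1..n + (n' - n)}. chY \<omega> (t * sqrt (real n') * (1 / real n')))"
      by (intro prod.cong) (auto simp: c_def)
    also have "\<dots> = chY \<omega> (t * sqrt (real n') * (1 / real n')) ^ (n' - n)" by simp
    finally show "g1 (Y \<omega>) * (\<Prod>k\<in>{1..n'}. chY \<omega> ((t * sqrt (real n')) * c k)) + (1 - g1 (Y \<omega>)) = (if \<xi> < mm (Y \<omega>) then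
      chY \<omega> (t * sqrt (real n') * (1 / real n' - 1 / real n)) ^ n * chY \<omega> (t * sqrt (real n') * (1 / real n')) ^ (n' - n)
     else 1)" by (simp add: g1_def)
  qed
  finally show ?thesis .
qed

end

lemma nn_ge: assumes "K \<ge> 1" "Mm > (1::nat)" shows "real l + 1 \<le> real (K * Mm ^ l)"
proof -
  have "l + 1 \<le> 2 ^ l" by (induction l) auto
  also have "(2::nat) ^ l \<le> Mm ^ l" using assms by (intro power_mono) auto
  also have "Mm ^ l \<le> K * Mm ^ l" using assms by simp
  finally show ?thesis by linarith
qed

lemma inv_lim: assumes "K \<ge> 1" "Mm > (1::nat)" shows "(\<lambda>l. c / real (K * Mm ^ l)) \<longlonglongrightarrow> 0"
proof (rule Lim_null_comparison[OF always_eventually])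
  show "\<forall>l. norm (c / real (K * Mm ^ l)) \<le> \<bar>c\<bar> / real (Suc l)"
  proof
    fix l
    have p: "0 < real (K * Mm ^ l)" using assms by simp
    have "norm (c / real (K * Mm ^ l)) = \<bar>c\<bar> / real (K * Mm ^ l)" using p by simp
    also have "\<dots> \<le> \<bar>c\<bar> / real (Suc l)"
      using nn_ge[OF assms, of l] by (intro divide_left_mono) auto
    finally show "norm (c / real (K * Mm ^ l)) \<le> \<bar>c\<bar> / real (Suc l)" .
  qed
  show "(\<lambda>l. \<bar>c\<bar> / real (Suc l)) \<longlonglongrightarrow> 0" using LIMSEQ_Suc[OF lim_const_over_n[of "\<bar>c\<bar>"]] by simp
qed

lemma sq_to_zero: fixes f :: "nat \<Rightarrow> real" assumes "(\<lambda>n. (f n)^2) \<longlonglongrightarrow> 0" shows "f \<longlonglongrightarrow> 0"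
proof -
  have "(\<lambda>n. sqrt ((f n)^2)) \<longlonglongrightarrow> sqrt 0" by (intro tendsto_intros assms)
  then have "(\<lambda>n. \<bar>f n\<bar>) \<longlonglongrightarrow> 0" by simp
  then show ?thesis by (simp add: tendsto_rabs_zero_iff)
qed

context nested begin

lemma charE_lim:
  assumes K: "K \<ge> 1" and Mm: "Mm > (1::nat)"
  shows "(\<lambda>l. char (distr M borel (Ev \<xi> (K * Mm ^ l) (K * Mm ^ Suc l))) t) \<longlonglongrightarrow>
    (\<integral>\<omega>. (if \<xi> < mm (Y \<omega>) then complex_of_real (exp (- vv (Y \<omega>) * (t^2 * (real Mm - 1)) / 2)) else 1) \<partial>M)"
proof -
  define nl where "nl l = K * Mm ^ l" for l
  define s1 where "s1 l = t * sqrt (real (nl (Suc l))) * (1 / real (nl (Suc l)) - 1 / real (nl l))" for l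
  define s2 where "s2 l = t * sqrt (real (nl (Suc l))) * (1 / real (nl (Suc l)))" for l
  define c1 where "c1 = t^2 * (real Mm - 1)^2 / real Mm"
  define c2 where "c2 = t^2 * (real Mm - 1) / real Mm"
  have npos: "0 < real (nl l)" for l using K Mm by (simp add: nl_def)
  have nS: "real (nl (Suc l)) = real Mm * real (nl l)" for l by (simp add: nl_def)
  have Mpos: "0 < real Mm" using Mm by simp
  have le: "1 \<le> nl l" "nl l \<le> nl (Suc l)" for l
    using K Mm by (auto simp: nl_def)
  have s1sq: "(s1 l)^2 = c1 / real (nl l)" for l
  proof -
    have "(s1 l)^2 = t^2 * (sqrt (real (nl (Suc l))))^2 * (1 / real (nl (Suc l)) - 1 / real (nl l))^2"
      unfolding s1_def by (simp only: power_mult_distrib)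
    also have "\<dots> = t^2 * (real Mm * real (nl l)) * (1 / (real Mm * real (nl l)) - 1 / real (nl l))^2"
      using npos[of "Suc l"] by (simp add: nS)
    also have "\<dots> = c1 / real (nl l)"
      using npos[of l] Mpos by (simp add: c1_def field_simps power2_eq_square)
    finally show ?thesis .
  qed
  have s2sq: "(s2 l)^2 = c2 / (real Mm - 1) / real (nl l)" for l
  proof -
    have "(s2 l)^2 = t^2 * (sqrt (real (nl (Suc l))))^2 * (1 / real (nl (Suc l)))^2"
      unfolding s2_def by (simp only: power_mult_distrib)
    also have "\<dots> = t^2 * (real Mm * real (nl l)) * (1 / (real Mm * real (nl l)))^2"
      using npos[of "Suc l"] by (simp add: nS)
    also have "\<dots> = c2 / (real Mm - 1) / real (nl l)"
      using npos[of l] Mpos Mm by (simp add: c2_def field_simps power2_eq_square)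
    finally show ?thesis .
  qed
  have a1: "real (nl l) * (s1 l)^2 = c1" for l using npos[of l] by (simp add: s1sq)
  have a2: "real (nl (Suc l) - nl l) * (s2 l)^2 = c2" for l
  proof -
    have "real (nl (Suc l) - nl l) = (real Mm - 1) * real (nl l)"
      using le[of l] by (simp add: of_nat_diff nS algebra_simps)
    then show ?thesis using npos[of l] Mm by (simp add: s2sq)
  qed
  have s1z: "s1 \<longlonglongrightarrow> 0"
    by (rule sq_to_zero) (unfold s1sq nl_def, rule inv_lim[OF K Mm])
  have s2z: "s2 \<longlonglongrightarrow> 0"
    by (rule sq_to_zero) (unfold s2sq nl_def, rule inv_lim[OF K Mm])
  have cc: "c1 + c2 = t^2 * (real Mm - 1)"
    using Mpos by (simp add: c1_def c2_def field_simps power2_eq_square)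
  have lim: "(\<lambda>l. \<integral>\<omega>. (if \<xi> < mm (Y \<omega>) then chY \<omega> (s1 l) ^ nl l * chY \<omega> (s2 l) ^ (nl (Suc l) - nl l) else 1) \<partial>M)
     \<longlonglongrightarrow> (\<integral>\<omega>. (if \<xi> < mm (Y \<omega>) then complex_of_real (exp (- vv (Y \<omega>) * (t^2 * (real Mm - 1)) / 2)) else 1) \<partial>M)"
  proof (rule integral_dominated_convergence[where w="\<lambda>_. 1"])
    show "(\<lambda>\<omega>. if \<xi> < mm (Y \<omega>) then complex_of_real (exp (- vv (Y \<omega>) * (t^2 * (real Mm - 1)) / 2)) else 1) \<in> borel_measurable M"
      by measurable
    show "(\<lambda>\<omega>. if \<xi> < mm (Y \<omega>) then chY \<omega> (s1 l) ^ nl l * chY \<omega> (s2 l) ^ (nl (Suc l) - nl l) else 1) \<in> borel_measurable M" for l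
      by measurable
    show "integrable M (\<lambda>_. 1::real)" by simp
    show "AE \<omega> in M. norm (if \<xi> < mm (Y \<omega>) then chY \<omega> (s1 l) ^ nl l * chY \<omega> (s2 l) ^ (nl (Suc l) - nl l) else 1) \<le> 1" for l
      by (intro AE_I2) (auto simp: norm_mult norm_power intro!: mult_le_one power_le_one char_psi_le1)
    show "AE \<omega> in M. (\<lambda>l. if \<xi> < mm (Y \<omega>) then chY \<omega> (s1 l) ^ nl l * chY \<omega> (s2 l) ^ (nl (Suc l) - nl l) else 1)
       \<longlonglongrightarrow> (if \<xi> < mm (Y \<omega>) then complex_of_real (exp (- vv (Y \<omega>) * (t^2 * (real Mm - 1)) / 2)) else 1)"
      using AE_good
    proof (elim AE_mp, intro AE_I2 impI)
      fix \<omega> assume g: "good (Y \<omega>)"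
      note P = psi_distr_props[OF g]
      have L1: "(\<lambda>l. chY \<omega> (s1 l) ^ nl l) \<longlonglongrightarrow> complex_of_real (exp (- vv (Y \<omega>) * c1 / 2))"
        using char_pow_lim[OF P(1) P(2) P(3) P(4) s1z, of nl c1] a1 P(5) by simp
      have L2: "(\<lambda>l. chY \<omega> (s2 l) ^ (nl (Suc l) - nl l)) \<longlonglongrightarrow> complex_of_real (exp (- vv (Y \<omega>) * c2 / 2))"
        using char_pow_lim[OF P(1) P(2) P(3) P(4) s2z, of "\<lambda>l. nl (Suc l) - nl l" c2] a2 P(5) by simp
      have "(\<lambda>l. chY \<omega> (s1 l) ^ nl l * chY \<omega> (s2 l) ^ (nl (Suc l) - nl l))
          \<longlonglongrightarrow> complex_of_real (exp (- vv (Y \<omega>) * c1 / 2)) * complex_of_real (exp (- vv (Y \<omega>) * c2 / 2))"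
        by (rule tendsto_mult[OF L1 L2])
      also have "complex_of_real (exp (- vv (Y \<omega>) * c1 / 2)) * complex_of_real (exp (- vv (Y \<omega>) * c2 / 2))
          = complex_of_real (exp (- vv (Y \<omega>) * (t^2 * (real Mm - 1)) / 2))"
      proof -
        have e: "- vv (Y \<omega>) * c1 / 2 + - vv (Y \<omega>) * c2 / 2 = - vv (Y \<omega>) * (t^2 * (real Mm - 1)) / 2"
          unfolding cc[symmetric] by (simp add: field_simps)
        show ?thesis unfolding of_real_mult[symmetric] exp_add[symmetric] e ..
      qed
      finally show "(\<lambda>l. if \<xi> < mm (Y \<omega>) then chY \<omega> (s1 l) ^ nl l * chY \<omega> (s2 l) ^ (nl (Suc l) - nl l) else 1)
       \<longlonglongrightarrow> (if \<xi> < mm (Y \<omega>) then complex_of_real (exp (- vv (Y \<omega>) * (t^2 * (real Mm - 1)) / 2)) else 1)"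
        by simp
    qed
  qed
  have "char (distr M borel (Ev \<xi> (nl l) (nl (Suc l)))) t =
       (\<integral>\<omega>. (if \<xi> < mm (Y \<omega>) then chY \<omega> (s1 l) ^ nl l * chY \<omega> (s2 l) ^ (nl (Suc l) - nl l) else 1) \<partial>M)" for l
    unfolding s1_def s2_def by (rule charE[OF le])
  with lim show ?thesis by (simp add: nl_def)
qed

end

context nested begin

definition "Tv \<xi> (Mm::nat) \<omega> = indicator {\<xi><..} (mm (Y \<omega>)) * (sqrt ((real Mm - 1) * vv (Y \<omega>)) * N \<omega>)"

lemma Tv_meas[measurable]: "Tv \<xi> Mm \<in> borel_measurable M"
  unfolding Tv_def by measurable

lemma PY_sf: "sigma_finite_measure PY"
  by (rule prob_space_imp_sigma_finite[OF PY_prob])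

lemma char_Tv:
  assumes Mm: "Mm > (1::nat)"
  shows "char (distr M borel (Tv \<xi> Mm)) t =
    (\<integral>\<omega>. (if \<xi> < mm (Y \<omega>) then complex_of_real (exp (- vv (Y \<omega>) * (t^2 * (real Mm - 1)) / 2)) else 1) \<partial>M)"
proof -
  define a where "a y = t * (indicator {\<xi><..} (mm y) * sqrt ((real Mm - 1) * vv y))" for y
  have am[measurable]: "a \<in> borel_measurable borel" unfolding a_def by measurable
  define PN where "PN = distr M borel N"
  have PN: "PN = std_normal_distribution" unfolding PN_def by (rule N_normal)
  interpret PNp: prob_space PN unfolding PN_def by (rule prob_space_distr) simp
  interpret PP: pair_sigma_finite PY PN
    by (intro pair_sigma_finite.intro PY_sf prob_space_imp_sigma_finite PNp.prob_space_axioms)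
  interpret PPp: prob_space "PY \<Otimes>\<^sub>M PN" by (intro prob_space_pair PY_prob PNp.prob_space_axioms)
  have YNm: "(\<lambda>\<omega>. (Y \<omega>, N \<omega>)) \<in> measurable M (borel \<Otimes>\<^sub>M borel)" by measurable
  have fm: "(\<lambda>p. iexp (a (fst p) * snd p)) \<in> borel_measurable (borel \<Otimes>\<^sub>M borel)" by measurable
  have fm': "(\<lambda>p. iexp (a (fst p) * snd p)) \<in> borel_measurable (PY \<Otimes>\<^sub>M PN)"
    using fm unfolding PN_def by (simp add: measurable_cong_sets[OF sets_pair_measure_cong[OF sets_distr sets_distr] refl])
  have fi: "integrable (PY \<Otimes>\<^sub>M PN) (\<lambda>(y, x). iexp (a y * x))"
    by (rule bounded_integrable) (use fm' in \<open>simp_all add: case_prod_beta' PPp.prob_space_axioms\<close>)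
  have "char (distr M borel (Tv \<xi> Mm)) t = (\<integral>\<omega>. iexp (t * Tv \<xi> Mm \<omega>) \<partial>M)"
    unfolding char_def by (rule integral_distr) simp_all
  also have "\<dots> = (\<integral>\<omega>. iexp (a (Y \<omega>) * N \<omega>) \<partial>M)"
    by (simp add: Tv_def a_def mult.assoc)
  also have "\<dots> = (\<integral>p. iexp (a (fst p) * snd p) \<partial>distr M (borel \<Otimes>\<^sub>M borel) (\<lambda>\<omega>. (Y \<omega>, N \<omega>)))"
    by (subst integral_distr[OF YNm fm]) simp
  also have "\<dots> = integral\<^sup>L (PY \<Otimes>\<^sub>M PN) (\<lambda>(y, x). iexp (a y * x))"
    by (simp add: YN_distr PN_def case_prod_beta')
  also have "\<dots> = (\<integral>y. (\<integral>x. iexp (a y * x) \<partial>PN) \<partial>PY)"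
    by (rule PP.integral_fst[OF fi, symmetric])
  also have "\<dots> = (\<integral>y. complex_of_real (exp (- ((a y)^2) / 2)) \<partial>PY)"
  proof (rule Bochner_Integration.integral_cong[OF refl])
    fix y
    have "(\<integral>x. iexp (a y * x) \<partial>PN) = char std_normal_distribution (a y)"
      unfolding char_def PN ..
    then show "(\<integral>x. iexp (a y * x) \<partial>PN) = complex_of_real (exp (- ((a y)^2) / 2))"
      by (simp add: char_std_normal_distribution)
  qed
  also have "\<dots> = (\<integral>\<omega>. complex_of_real (exp (- ((a (Y \<omega>))^2) / 2)) \<partial>M)"
    by (rule integral_distr) simp_all
  also have "\<dots> = (\<integral>\<omega>. (if \<xi> < mm (Y \<omega>) then complex_of_real (exp (- vv (Y \<omega>) * (t^2 * (real Mm - 1)) / 2)) else 1) \<partial>M)"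
  proof (rule Bochner_Integration.integral_cong[OF refl])
    fix \<omega>
    have nn: "0 \<le> (real Mm - 1) * vv (Y \<omega>)" using Mm vv_nonneg[of "Y \<omega>"] by simp
    show "complex_of_real (exp (- ((a (Y \<omega>))^2) / 2)) = (if \<xi> < mm (Y \<omega>) then complex_of_real (exp (- vv (Y \<omega>) * (t^2 * (real Mm - 1)) / 2)) else 1)"
      using nn by (simp add: a_def power_mult_distrib indicator_def algebra_simps)
  qed
  finally show ?thesis .
qed

end

context nested begin

definition "Dv \<xi> n n' \<omega> = sqrt (real n') * (max (avg n' \<omega> - \<xi>) 0 - max (avg n \<omega> - \<xi>) 0)"

lemma Dv_meas[measurable]: "Dv \<xi> n n' \<in> borel_measurable M"
  unfolding Dv_def by measurable

lemma DE_eq: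
  assumes "mm (Y \<omega>) \<noteq> \<xi>" "\<bar>U n \<omega>\<bar> < \<bar>mm (Y \<omega>) - \<xi>\<bar>" "\<bar>U n' \<omega>\<bar> < \<bar>mm (Y \<omega>) - \<xi>\<bar>"
  shows "Dv \<xi> n n' \<omega> = Ev \<xi> n n' \<omega>"
proof (cases "\<xi> < mm (Y \<omega>)")
  case True
  then have "avg n \<omega> > \<xi>" "avg n' \<omega> > \<xi>" using assms by (auto simp: U_def)
  then show ?thesis using True by (simp add: Dv_def Ev_def)
next
  case False
  then have "avg n \<omega> < \<xi>" "avg n' \<omega> < \<xi>" using assms by (auto simp: U_def)
  then show ?thesis using False by (simp add: Dv_def Ev_def)
qed

lemma char_diff_bound:
  assumes P0: "prob {\<omega> \<in> space M. mm (Y \<omega>) = \<xi>} = 0"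
  shows "norm (char (distr M borel (Dv \<xi> n n')) t - char (distr M borel (Ev \<xi> n n')) t)
     \<le> 2 * (prob (Qset \<xi> n) + prob (Qset \<xi> n'))"
proof -
  define B where "B = {\<omega> \<in> space M. mm (Y \<omega>) = \<xi>} \<union> Qset \<xi> n \<union> Qset \<xi> n'"
  have Bm[measurable]: "B \<in> sets M" unfolding B_def by measurable
  have i1: "integrable M (\<lambda>\<omega>. iexp (t * Dv \<xi> n n' \<omega>))"
    by (rule bounded_integrable) (simp_all, unfold_locales)
  have i2: "integrable M (\<lambda>\<omega>. iexp (t * Ev \<xi> n n' \<omega>))"
    by (rule bounded_integrable) (simp_all, unfold_locales)
  have "char (distr M borel (Dv \<xi> n n')) t - char (distr M borel (Ev \<xi> n n')) t
      = (\<integral>\<omega>. iexp (t * Dv \<xi> n n' \<omega>) \<partial>M) - (\<integral>\<omega>. iexp (t * Ev \<xi> n n' \<omega>) \<partial>M)"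
    unfolding char_def by (subst (1 2) integral_distr) simp_all
  also have "\<dots> = (\<integral>\<omega>. iexp (t * Dv \<xi> n n' \<omega>) - iexp (t * Ev \<xi> n n' \<omega>) \<partial>M)"
    by (rule Bochner_Integration.integral_diff[OF i1 i2, symmetric])
  finally have "norm (char (distr M borel (Dv \<xi> n n')) t - char (distr M borel (Ev \<xi> n n')) t)
     \<le> (\<integral>\<omega>. norm (iexp (t * Dv \<xi> n n' \<omega>) - iexp (t * Ev \<xi> n n' \<omega>)) \<partial>M)"
    by simp
  also have "\<dots> \<le> (\<integral>\<omega>. 2 * indicator B \<omega> \<partial>M)"
  proof (rule integral_mono)
    show "integrable M (\<lambda>\<omega>. norm (iexp (t * Dv \<xi> n n' \<omega>) - iexp (t * Ev \<xi> n n' \<omega>)))"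
      using i1 i2 by simp
    show "integrable M (\<lambda>\<omega>. 2 * indicator B \<omega> :: real)"
      using emeasure_finite[of B] by (intro integrable_mult_right integrable_real_indicator Bm) (simp add: less_top[symmetric])
    fix \<omega> assume w: "\<omega> \<in> space M"
    show "norm (iexp (t * Dv \<xi> n n' \<omega>) - iexp (t * Ev \<xi> n n' \<omega>)) \<le> 2 * indicator B \<omega>"
    proof (cases "\<omega> \<in> B")
      case True
      have "norm (iexp (t * Dv \<xi> n n' \<omega>) - iexp (t * Ev \<xi> n n' \<omega>)) \<le> norm (iexp (t * Dv \<xi> n n' \<omega>)) + norm (iexp (t * Ev \<xi> n n' \<omega>))"
        by (rule norm_triangle_ineq4)
      then show ?thesis using True by simp
    next
      case False
      then have "Dv \<xi> n n' \<omega> = Ev \<xi> n n' \<omega>"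
        using w by (intro DE_eq) (auto simp: B_def Qset_def)
      then show ?thesis by simp
    qed
  qed
  also have "\<dots> = 2 * prob B" using Bm by simp
  also have "prob B \<le> prob {\<omega> \<in> space M. mm (Y \<omega>) = \<xi>} + prob (Qset \<xi> n) + prob (Qset \<xi> n')"
  proof -
    have "prob B \<le> prob ({\<omega> \<in> space M. mm (Y \<omega>) = \<xi>} \<union> Qset \<xi> n) + prob (Qset \<xi> n')"
      unfolding B_def by (rule measure_Un_le) auto
    also have "prob ({\<omega> \<in> space M. mm (Y \<omega>) = \<xi>} \<union> Qset \<xi> n) \<le> prob {\<omega> \<in> space M. mm (Y \<omega>) = \<xi>} + prob (Qset \<xi> n)"
      by (rule measure_Un_le) auto
    finally show ?thesis by simp
  qed
  finally show ?thesis using P0 by simp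
qed

lemma nl_lim: assumes "K \<ge> 1" "Mm > (1::nat)" shows "filterlim (\<lambda>l. K * Mm ^ l) sequentially sequentially"
proof (rule filterlim_at_top_mono[OF filterlim_ident])
  show "\<forall>\<^sub>F l in sequentially. l \<le> K * Mm ^ l"
    using nn_ge[OF assms] by (intro always_eventually allI) (metis add_le_cancel_left le_add1 of_nat_1 of_nat_add of_nat_le_iff order_trans)
qed

lemma main_loc:
  assumes K: "K \<ge> 1" and Mm: "Mm > (1::nat)"
    and cdfc: "isCont (cdf (distr M borel X0)) \<xi>"
  shows "weak_conv_m (\<lambda>l. distr M borel (Dv \<xi> (K * Mm ^ l) (K * Mm ^ Suc l))) (distr M borel (Tv \<xi> Mm))"
proof (rule levy_continuity)
  show "real_distribution (distr M borel (Dv \<xi> (K * Mm ^ l) (K * Mm ^ Suc l)))" for l by simp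
  show "real_distribution (distr M borel (Tv \<xi> Mm))" by simp
  have "distr M borel X0 = distr M borel (\<lambda>\<omega>. mm (Y \<omega>))"
    by (rule distr_cong_AE[OF refl refl X0_eq]) simp_all
  then have cc: "isCont (cdf (distr M borel (\<lambda>\<omega>. mm (Y \<omega>)))) \<xi>" using cdfc by simp
  interpret R: real_distribution "distr M borel (\<lambda>\<omega>. mm (Y \<omega>))" by simp
  from cc have "measure (distr M borel (\<lambda>\<omega>. mm (Y \<omega>))) {\<xi>} = 0" by (simp add: R.isCont_cdf)
  then have P0: "prob {\<omega> \<in> space M. mm (Y \<omega>) = \<xi>} = 0"
    by (subst (asm) measure_distr) (auto simp: vimage_def Int_def conj_commute)
  fix t
  define nl where "nl l = K * Mm ^ l" for l
  have nlim: "filterlim nl sequentially sequentially" unfolding nl_def by (rule nl_lim[OF K Mm])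
  have nlim2: "filterlim (\<lambda>l. nl (Suc l)) sequentially sequentially"
    using filterlim_compose[OF nlim filterlim_Suc] by (simp add: o_def)
  have q1: "(\<lambda>l. prob (Qset \<xi> (nl l))) \<longlonglongrightarrow> 0" by (rule filterlim_compose[OF Q_lim nlim])
  have q2: "(\<lambda>l. prob (Qset \<xi> (nl (Suc l)))) \<longlonglongrightarrow> 0" by (rule filterlim_compose[OF Q_lim nlim2])
  have "(\<lambda>l. 2 * (prob (Qset \<xi> (nl l)) + prob (Qset \<xi> (nl (Suc l))))) \<longlonglongrightarrow> 2 * (0 + 0)"
    by (intro tendsto_intros q1 q2)
  then have b0: "(\<lambda>l. 2 * (prob (Qset \<xi> (nl l)) + prob (Qset \<xi> (nl (Suc l))))) \<longlonglongrightarrow> 0" by simp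
  have d0: "(\<lambda>l. char (distr M borel (Dv \<xi> (nl l) (nl (Suc l)))) t - char (distr M borel (Ev \<xi> (nl l) (nl (Suc l)))) t) \<longlonglongrightarrow> 0"
    by (rule Lim_null_comparison[OF always_eventually[OF allI[OF char_diff_bound[OF P0]]] b0])
  have e: "(\<lambda>l. char (distr M borel (Ev \<xi> (nl l) (nl (Suc l)))) t) \<longlonglongrightarrow> char (distr M borel (Tv \<xi> Mm)) t"
    using charE_lim[OF K Mm, of \<xi> t] char_Tv[OF Mm, of \<xi> t] by (simp add: nl_def)
  have "(\<lambda>l. (char (distr M borel (Dv \<xi> (nl l) (nl (Suc l)))) t - char (distr M borel (Ev \<xi> (nl l) (nl (Suc l)))) t)
       + char (distr M borel (Ev \<xi> (nl l) (nl (Suc l)))) t) \<longlonglongrightarrow> 0 + char (distr M borel (Tv \<xi> Mm)) t"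
    by (rule tendsto_add[OF d0 e])
  then show "(\<lambda>l. char (distr M borel (Dv \<xi> (K * Mm ^ l) (K * Mm ^ Suc l))) t) \<longlonglongrightarrow> char (distr M borel (Tv \<xi> Mm)) t"
    by (simp add: nl_def)
qed

end

theorem mainTheorem7:
  fixes M :: "'a measure"
    and Y :: "'a \<Rightarrow> real ^ 'd"
    and Z :: "'a \<Rightarrow> real ^ 'q"
    and Zs :: "nat \<Rightarrow> 'a \<Rightarrow> real ^ 'q"
    and \<phi> :: "real ^ 'd \<Rightarrow> real ^ 'q \<Rightarrow> real"
    and N :: "'a \<Rightarrow> real"
    and K Mm :: nat
    and \<xi> :: real
  assumes "prob_space M"
    and "K \<ge> 1" and "Mm > 1"
    and Y_meas: "Y \<in> borel_measurable M"
    and Z_meas: "Z \<in> borel_measurable M"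
    and Zs_meas: "\<And>k. Zs k \<in> borel_measurable M"
    and phi_meas: "(\<lambda>(y, z). \<phi> y z) \<in> borel_measurable borel"
    and indep_YZ: "prob_space.indep_set M (sets (vimage_algebra (space M) Y borel))
                                          (sets (vimage_algebra (space M) Z borel))"
    and Zs_copies: "\<And>k. k \<ge> 1 \<Longrightarrow> distr M borel (Zs k) = distr M borel Z"
    and indep_Y_Zs: "prob_space.indep_sets M
          (\<lambda>i. case i of None \<Rightarrow> sets (vimage_algebra (space M) Y borel)
                       | Some k \<Rightarrow> sets (vimage_algebra (space M) (Zs k) borel))
          (insert None (Some ` {1..}))"
    and N_meas: "N \<in> borel_measurable M"
    and N_normal: "distr M borel N = density lborel std_normal_density"
    and indep_NY: "prob_space.indep_set M (sets (vimage_algebra (space M) Y borel))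
                                          (sets (vimage_algebra (space M) N borel))"
    and L2: "integrable M (\<lambda>\<omega>. (\<phi> (Y \<omega>) (Z \<omega>))^2)"
    and cdf_cont: "\<And>x. isCont (cdf (distr M borel
                     (real_cond_exp M (vimage_algebra (space M) Y borel) (\<lambda>\<omega>. \<phi> (Y \<omega>) (Z \<omega>))))) x"
  shows "weak_conv_m
           (\<lambda>l. distr M borel (\<lambda>\<omega>. (1 / sqrt (hstep K Mm (Suc l))) *
              (max (nested_X K Mm \<phi> Y Zs (Suc l) \<omega> - \<xi>) 0 - max (nested_X K Mm \<phi> Y Zs l \<omega> - \<xi>) 0)))
           (distr M borel (\<lambda>\<omega>.
              indicator {\<xi><..} (real_cond_exp M (vimage_algebra (space M) Y borel) (\<lambda>\<omega>. \<phi> (Y \<omega>) (Z \<omega>)) \<omega>)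
              * (sqrt ((real Mm - 1) * real_cond_var M (vimage_algebra (space M) Y borel) (\<lambda>\<omega>. \<phi> (Y \<omega>) (Z \<omega>)) \<omega>)
                 * N \<omega>)))"
proof -
  interpret nested M Y Z Zs \<phi> N
    by (intro nested.intro nested_axioms.intro assms)
  have Deq: "(\<lambda>\<omega>. (1 / sqrt (hstep K Mm (Suc l))) *
              (max (nested_X K Mm \<phi> Y Zs (Suc l) \<omega> - \<xi>) 0 - max (nested_X K Mm \<phi> Y Zs l \<omega> - \<xi>) 0))
      = Dv \<xi> (K * Mm ^ l) (K * Mm ^ Suc l)" for l
    by (rule ext) (simp add: Dv_def avg_def nested_X_def hstep_def real_sqrt_divide)
  have Teq: "distr M borel (\<lambda>\<omega>.
              indicator {\<xi><..} (real_cond_exp M (vimage_algebra (space M) Y borel) (\<lambda>\<omega>. \<phi> (Y \<omega>) (Z \<omega>)) \<omega>)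
              * (sqrt ((real Mm - 1) * real_cond_var M (vimage_algebra (space M) Y borel) (\<lambda>\<omega>. \<phi> (Y \<omega>) (Z \<omega>)) \<omega>)
                 * N \<omega>)) = distr M borel (Tv \<xi> Mm)"
  proof (rule distr_cong_AE[OF refl refl])
    show "AE \<omega> in M. indicator {\<xi><..} (real_cond_exp M (vimage_algebra (space M) Y borel) (\<lambda>\<omega>. \<phi> (Y \<omega>) (Z \<omega>)) \<omega>)
              * (sqrt ((real Mm - 1) * real_cond_var M (vimage_algebra (space M) Y borel) (\<lambda>\<omega>. \<phi> (Y \<omega>) (Z \<omega>)) \<omega>)
                 * N \<omega>) = Tv \<xi> Mm \<omega>"
      using X0_eq V0_eq unfolding Fv_def by eventually_elim (simp add: Tv_def)
    show "(\<lambda>\<omega>. indicator {\<xi><..} (real_cond_exp M (vimage_algebra (space M) Y borel) (\<lambda>\<omega>. \<phi> (Y \<omega>) (Z \<omega>)) \<omega>)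
              * (sqrt ((real Mm - 1) * real_cond_var M (vimage_algebra (space M) Y borel) (\<lambda>\<omega>. \<phi> (Y \<omega>) (Z \<omega>)) \<omega>)
                 * N \<omega>)) \<in> borel_measurable M"
      unfolding real_cond_var_def by measurable
  qed simp
  have cc: "isCont (cdf (distr M borel X0)) \<xi>" using cdf_cont[of \<xi>] unfolding Fv_def .
  show ?thesis
    unfolding Deq Teq by (rule main_loc[OF assms(2) assms(3) cc])
qed

end
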